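(* Let $(X_1,Y_1),(X_2,Y_2),\dots$ be a random sample (i.i.d. copies) of a random vector $(X,Y)$ with continuous joint distribution function $H$, marginal distribution functions $F$ and $G$, and (unique) copula $A$. Assume that $A$ allows a continuous Markov kernel $K_A$ and define $K_H(x,(-\infty,y]):=K_A(F(x),[0,G(y)])$ for $x,y\in\mathbb{R}$. Let $F_n,G_n$ be the univariate empirical distribution functions and $E_n$ the empirical copula of $(X_1,Y_1),\dots,(X_n,Y_n)$, and set $N(n):=\lfloor n^s\rfloor$ for some $s\in(0,\tfrac12)$. Then, almost surely, $$\lim_{n\to\infty}\sup_{(x,y)\in\mathbb{R}^2}\left|K_{\mathcal{CB}_{N(n)}(E_n)}(F_n(x),[0,G_n(y)])-K_H(x,(-\infty,y])\right|=0.$$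
   Context: A (bivariate) copula is a distribution function on $[0,1]^2$ with uniform marginals; each copula $B$ corresponds to a doubly stochastic measure $\mu_B$ with $B(x,y)=\mu_B([0,x]\times[0,y])$. A Markov kernel of a copula $B$ is a map $K_B:[0,1]\times\mathcal{B}([0,1])\to[0,1]$ such that $x\mapsto K_B(x,E)$ is measurable for each Borel $E$, $E\mapsto K_B(x,E)$ is a probability measure for each $x$, and $\int_{E_1}K_B(x,E_2)\,d\lambda(x)=\mu_B(E_1\times E_2)$ for all Borel $E_1,E_2\subseteq[0,1]$ ($\lambda$ = Lebesgue measure). A copula $A$ allows a continuous Markov kernel if it has a version $K_A$ of its Markov kernel such that $(x,y)\mapsto K_A(x,[0,y])$ is continuous on $[0,1]^2$; $K_A$ denotes this version. Checkerboard approximation: for $N\in\mathbb{N}$ let $I_1^N=[0,\tfrac1N]$, $I_i^N=(\tfrac{i-1}N,\tfrac iN]$ for $i=2,\dots,N$, and $Q_{i,j}^N=I_i^N\times I_j^N$. For a copula $B$, $\mathcal{CB}_N(B)$ is the absolutely continuous copula with density $N^2\sum_{i,j=1}^N\mu_B(Q^N_{i,j})\mathbf 1_{Q^N_{i,j}}$, and its Markov kernel is taken to be the version $K_{\mathcal{CB}_N(B)}(x,[0,y])=N^2\sum_{i,j=1}^N\mu_B(Q^N_{i,j})\mathbf 1_{I^N_i}(x)\,\lambda([0,y]\cap I^N_j)$ for $(x,y)\in[0,1]^2$. Empirical copula: with $H_n$ the bivariate empirical distribution function of the first $n$ observations, almost surely there are no ties and there is a unique subcopula $E_n'$ on $\{0,\tfrac1n,\dots,1\}^2$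 with $H_n(x,y)=E_n'(F_n(x),G_n(y))$ for all $(x,y)$; $E_n$ is the copula extending $E_n'$ by bilinear interpolation on each square $[\tfrac{i-1}n,\tfrac in]\times[\tfrac{j-1}n,\tfrac jn]$. *)

theory Defs
  imports "HOL-Probability.Probability"
begin

text \<open>A (bivariate) copula, as a function on the unit square (values outside are irrelevant):
  grounded, uniform margins, 2-increasing.\<close>
definition is_copula :: "(real \<Rightarrow> real \<Rightarrow> real) \<Rightarrow> bool" where
  "is_copula C \<longleftrightarrow>
     (\<forall>u\<in>{0..1}. C u 0 = 0 \<and> C 0 u = 0 \<and> C u 1 = u \<and> C 1 u = u) \<and>
     (\<forall>u1 u2 v1 v2. 0 \<le> u1 \<and> u1 \<le> u2 \<and> u2 \<le> 1 \<and> 0 \<le> v1 \<and> v1 \<le> v2 \<and> v2 \<le> 1 \<longrightarrow>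
        C u2 v2 - C u1 v2 - C u2 v1 + C u1 v1 \<ge> 0)"

definition copula_measure :: "(real \<Rightarrow> real \<Rightarrow> real) \<Rightarrow> (real \<times> real) measure \<Rightarrow> bool" where
  "copula_measure C \<mu> \<longleftrightarrow>
     sets \<mu> = sets (borel :: (real \<times> real) measure) \<and>
     emeasure \<mu> (- ({0..1} \<times> {0..1})) = 0 \<and>
     (\<forall>x\<in>{0..1}. \<forall>y\<in>{0..1}. emeasure \<mu> ({0..x} \<times> {0..y}) = ennreal (C x y))"

text \<open>K is a Markov kernel of the copula C; K x is the probability measure E \<mapsto> K(x,E)
  on the Borel sets of [0,1].\<close>
definition markov_kernel_of :: "(real \<Rightarrow> real \<Rightarrow> real) \<Rightarrow> (real \<Rightarrow> real measure) \<Rightarrow> bool" where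
  "markov_kernel_of C K \<longleftrightarrow>
     (\<exists>\<mu>. copula_measure C \<mu> \<and>
       (\<forall>x\<in>{0..1}. prob_space (K x) \<and> sets (K x) = sets (restrict_space borel {0..1::real})) \<and>
       (\<forall>E\<in>sets (restrict_space borel {0..1::real}).
           (\<lambda>x. measure (K x) E) \<in> borel_measurable (restrict_space borel {0..1::real})) \<and>
       (\<forall>E1\<in>sets (restrict_space borel {0..1::real}). \<forall>E2\<in>sets (restrict_space borel {0..1::real}).
           (LINT x:E1|lborel. measure (K x) E2) = measure \<mu> (E1 \<times> E2)))"

definition continuous_markov_kernel_of :: "(real \<Rightarrow> real \<Rightarrow> real) \<Rightarrow> (real \<Rightarrow> real measure) \<Rightarrow> bool" where
  "continuous_markov_kernel_of C K \<longleftrightarrow>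
     markov_kernel_of C K \<and>
     continuous_on ({0..1} \<times> {0..1}) (\<lambda>(x,y). measure (K x) {0..y})"

definition cb_int :: "nat \<Rightarrow> nat \<Rightarrow> real set" where
  "cb_int N i = (if i = 1 then {0..1 / real N} else {(real i - 1) / real N <.. real i / real N})"

text \<open>mu_B(Q_{i,j}^N) for a copula B, written out by inclusion-exclusion
  (exact, since B is grounded).\<close>
definition cb_mass :: "nat \<Rightarrow> (real \<Rightarrow> real \<Rightarrow> real) \<Rightarrow> nat \<Rightarrow> nat \<Rightarrow> real" where
  "cb_mass N B i j =
     B (real i / real N) (real j / real N) - B ((real i - 1) / real N) (real j / real N)
   - B (real i / real N) ((real j - 1) / real N) + B ((real i - 1) / real N) ((real j - 1) / real N)"

text \<open>The chosen version of the Markov kernel of CB_N(B): K(x,[0,y]).\<close>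
definition cb_kernel :: "nat \<Rightarrow> (real \<Rightarrow> real \<Rightarrow> real) \<Rightarrow> real \<Rightarrow> real \<Rightarrow> real" where
  "cb_kernel N B x y =
     real N ^ 2 * (\<Sum>i\<in>{1..N}. \<Sum>j\<in>{1..N}.
        cb_mass N B i j * indicator (cb_int N i) x * measure lborel ({0..y} \<inter> cb_int N j))"

definition emp_df :: "(nat \<Rightarrow> real) \<Rightarrow> nat \<Rightarrow> real \<Rightarrow> real" where
  "emp_df Z n x = card {k. k < n \<and> Z k \<le> x} / real n"

text \<open>The empirical subcopula E_n' at grid point (i/n, j/n) (valid in the absence of ties,
  which holds almost surely): H_n(x,y) = E_n'(F_n x, G_n y).\<close>
definition emp_subcopula :: "(nat \<Rightarrow> real) \<Rightarrow> (nat \<Rightarrow> real) \<Rightarrow> nat \<Rightarrow> nat \<Rightarrow> nat \<Rightarrow> real" where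
  "emp_subcopula X Y n i j =
     card {k. k < n \<and> card {l. l < n \<and> X l \<le> X k} \<le> i \<and> card {l. l < n \<and> Y l \<le> Y k} \<le> j} / real n"

text \<open>Bilinear interpolation of grid values C(a,b) ~ value at (a/n, b/n), on [0,1]^2.\<close>
definition bilinear_ext :: "nat \<Rightarrow> (nat \<Rightarrow> nat \<Rightarrow> real) \<Rightarrow> real \<Rightarrow> real \<Rightarrow> real" where
  "bilinear_ext n C u v =
    (let a = min (n - 1) (nat \<lfloor>real n * u\<rfloor>); t = real n * u - real a;
         b = min (n - 1) (nat \<lfloor>real n * v\<rfloor>); s = real n * v - real b
     in (1 - t) * (1 - s) * C a b + t * (1 - s) * C (a + 1) b
        + (1 - t) * s * C a (b + 1) + t * s * C (a + 1) (b + 1))"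

definition emp_copula :: "(nat \<Rightarrow> real) \<Rightarrow> (nat \<Rightarrow> real) \<Rightarrow> nat \<Rightarrow> real \<Rightarrow> real \<Rightarrow> real" where
  "emp_copula X Y n = bilinear_ext n (emp_subcopula X Y n)"

end

theory Submission
  imports Defs "HOL-Real_Asymp.Real_Asymp"
begin

lemma copula_ground:
  assumes "is_copula A" "u \<in> {0..1}"
  shows "A u 0 = 0" "A 0 u = 0" "A u 1 = u" "A 1 u = u"
  using assms unfolding is_copula_def by auto

lemma copula_mono1:
  assumes "is_copula A" "0 \<le> u1" "u1 \<le> u2" "u2 \<le> 1" "0 \<le> v" "v \<le> 1"
  shows "0 \<le> A u2 v - A u1 v" "A u2 v - A u1 v \<le> u2 - u1"
proof -
  have r: "\<forall>u1 u2 v1 v2. 0 \<le> u1 \<and> u1 \<le> u2 \<and> u2 \<le> 1 \<and> 0 \<le> v1 \<and> v1 \<le> v2 \<and> v2 \<le> 1 \<longrightarrow>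
        A u2 v2 - A u1 v2 - A u2 v1 + A u1 v1 \<ge> 0" using assms(1) unfolding is_copula_def by blast
  have "A u2 v - A u1 v - A u2 0 + A u1 0 \<ge> 0" using r assms by auto
  then show "0 \<le> A u2 v - A u1 v" using copula_ground[OF assms(1), of u1] copula_ground[OF assms(1), of u2] assms by auto
  have "A u2 1 - A u1 1 - A u2 v + A u1 v \<ge> 0" using r assms by auto
  then show "A u2 v - A u1 v \<le> u2 - u1" using copula_ground[OF assms(1), of u1] copula_ground[OF assms(1), of u2] assms by auto
qed

lemma copula_mono2:
  assumes "is_copula A" "0 \<le> v1" "v1 \<le> v2" "v2 \<le> 1" "0 \<le> u" "u \<le> 1"
  shows "0 \<le> A u v2 - A u v1" "A u v2 - A u v1 \<le> v2 - v1"
proof -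
  have r: "\<forall>u1 u2 v1 v2. 0 \<le> u1 \<and> u1 \<le> u2 \<and> u2 \<le> 1 \<and> 0 \<le> v1 \<and> v1 \<le> v2 \<and> v2 \<le> 1 \<longrightarrow>
        A u2 v2 - A u1 v2 - A u2 v1 + A u1 v1 \<ge> 0" using assms(1) unfolding is_copula_def by blast
  have "A u v2 - A 0 v2 - A u v1 + A 0 v1 \<ge> 0" using r assms by auto
  then show "0 \<le> A u v2 - A u v1" using copula_ground[OF assms(1), of v1] copula_ground[OF assms(1), of v2] assms by auto
  have "A 1 v2 - A u v2 - A 1 v1 + A u v1 \<ge> 0" using r assms by auto
  then show "A u v2 - A u v1 \<le> v2 - v1" using copula_ground[OF assms(1), of v1] copula_ground[OF assms(1), of v2] assms by auto
qed

lemma copula_lip: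
  assumes "is_copula A" "u \<in> {0..1}" "u' \<in> {0..1}" "v \<in> {0..1}" "v' \<in> {0..1}"
  shows "\<bar>A u v - A u' v'\<bar> \<le> \<bar>u - u'\<bar> + \<bar>v - v'\<bar>"
proof -
  have h1: "\<bar>A u v - A u' v\<bar> \<le> \<bar>u - u'\<bar>"
  proof (cases "u \<le> u'")
    case True then show ?thesis using copula_mono1[OF assms(1), of u u' v] assms by auto
  next
    case False then show ?thesis using copula_mono1[OF assms(1), of u' u v] assms by auto
  qed
  have h2: "\<bar>A u' v - A u' v'\<bar> \<le> \<bar>v - v'\<bar>"
  proof (cases "v \<le> v'")
    case True then show ?thesis using copula_mono2[OF assms(1), of v v' u'] assms by auto
  next
    case False then show ?thesis using copula_mono2[OF assms(1), of v' v u'] assms by auto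
  qed
  show ?thesis using h1 h2 by linarith
qed

lemma copula_range:
  assumes "is_copula A" "u \<in> {0..1}" "v \<in> {0..1}"
  shows "0 \<le> A u v" "A u v \<le> 1"
  using copula_mono1[OF assms(1), of 0 u v] copula_mono1[OF assms(1), of u 1 v] copula_ground[OF assms(1)] assms
  by auto


lemma sets_R01: "E \<in> sets (restrict_space borel {0..1::real}) \<longleftrightarrow> E \<subseteq> {0..1} \<and> E \<in> sets borel"
  by (subst sets_restrict_space_iff) auto

lemma kernel_range:
  assumes "continuous_markov_kernel_of A KA" "t \<in> {0..1}"
  shows "0 \<le> measure (KA t) {0..w}" "measure (KA t) {0..w} \<le> 1"
proof -
  have "prob_space (KA t)" using assms unfolding continuous_markov_kernel_of_def markov_kernel_of_def by auto
  then show "0 \<le> measure (KA t) {0..w}" "measure (KA t) {0..w} \<le> 1"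
    by (auto simp: prob_space.prob_le_1)
qed

lemma kernel_cont:
  assumes "continuous_markov_kernel_of A KA"
  shows "continuous_on ({0..1} \<times> {0..1}) (\<lambda>(x,y). measure (KA x) {0..y})"
  using assms unfolding continuous_markov_kernel_of_def by auto

lemma kernel_cont1:
  assumes "continuous_markov_kernel_of A KA" "w \<in> {0..1}"
  shows "continuous_on {0..1} (\<lambda>t. measure (KA t) {0..w})"
proof -
  have "continuous_on {0..1} ((\<lambda>(x,y). measure (KA x) {0..y}) \<circ> (\<lambda>t. (t, w)))"
    by (rule continuous_on_compose[OF _ continuous_on_subset[OF kernel_cont[OF assms(1)]]])
       (use assms in \<open>auto intro!: continuous_intros\<close>)
  then show ?thesis by (simp add: o_def)
qed

lemma kernel_integral:
  assumes "is_copula A" "continuous_markov_kernel_of A KA"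
    and "0 \<le> a" "a \<le> b" "b \<le> 1" "0 \<le> w" "w \<le> 1"
  shows "(LINT t:{a<..b}|lborel. measure (KA t) {0..w}) = A b w - A a w"
proof -
  obtain \<mu> where cm: "copula_measure A \<mu>" and
    int: "\<forall>E1\<in>sets (restrict_space borel {0..1::real}). \<forall>E2\<in>sets (restrict_space borel {0..1::real}).
           (LINT x:E1|lborel. measure (KA x) E2) = measure \<mu> (E1 \<times> E2)"
    using assms(2) unfolding continuous_markov_kernel_of_def markov_kernel_of_def by blast
  have sm: "sets \<mu> = sets (borel :: (real \<times> real) measure)" and
    em: "\<And>x y. x\<in>{0..1} \<Longrightarrow> y\<in>{0..1} \<Longrightarrow> emeasure \<mu> ({0..x} \<times> {0..y}) = ennreal (A x y)"
    using cm unfolding copula_measure_def by auto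
  have setsI: "S \<times> T \<in> sets \<mu>" if "S \<in> sets borel" "T \<in> sets borel" for S T :: "real set"
    unfolding sm using that by (simp add: borel_prod[symmetric])
  have "({0..b} \<times> {0..w}) = ({0..a} \<times> {0..w}) \<union> ({a<..b} \<times> {0..w})" using assms by auto
  moreover have "({0..a} \<times> {0..w}) \<inter> ({a<..b} \<times> {0..w}) = {}" by auto
  ultimately have "emeasure \<mu> ({0..b} \<times> {0..w}) = emeasure \<mu> ({0..a} \<times> {0..w}) + emeasure \<mu> ({a<..b} \<times> {0..w})"
    using plus_emeasure[of "{0..a} \<times> {0..w}" \<mu> "{a<..b} \<times> {0..w}"] setsI by auto
  then have e: "ennreal (A b w) = ennreal (A a w) + emeasure \<mu> ({a<..b} \<times> {0..w})"
    using em assms by auto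
  have pa: "0 \<le> A a w" "0 \<le> A b w" using copula_range[OF assms(1)] assms by auto
  have "emeasure \<mu> ({a<..b} \<times> {0..w}) = ennreal (A b w) - ennreal (A a w)"
    using e by (simp add: ennreal_add_diff_cancel_left)
  also have "\<dots> = ennreal (A b w - A a w)" using pa by (simp add: ennreal_minus)
  finally have "measure \<mu> ({a<..b} \<times> {0..w}) = A b w - A a w"
    using copula_mono1[OF assms(1), of a b w] assms by (simp add: measure_def)
  moreover have "{a<..b} \<in> sets (restrict_space borel {0..1::real})" "{0..w} \<in> sets (restrict_space borel {0..1::real})"
    using assms by (auto simp: sets_R01)
  ultimately show ?thesis using int by auto
qed

lemma kernel_average:
  assumes "is_copula A" "continuous_markov_kernel_of A KA"
    and "0 \<le> a" "a \<le> b" "b \<le> 1" "0 \<le> w" "w \<le> 1"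
    and "\<And>t. t \<in> {a..b} \<Longrightarrow> \<bar>measure (KA t) {0..w} - c\<bar> \<le> \<epsilon>"
  shows "\<bar>(A b w - A a w) - (b - a) * c\<bar> \<le> (b - a) * \<epsilon>"
proof -
  let ?f = "\<lambda>t. measure (KA t) {0..w}"
  have "continuous_on {a..b} ?f"
    by (rule continuous_on_subset[OF kernel_cont1[OF assms(2)]]) (use assms in auto)
  then have "set_integrable lborel {a..b} ?f" by (rule borel_integrable_atLeastAtMost')
  then have fi: "set_integrable lborel {a<..b} ?f" by (rule set_integrable_subset) auto
  have ci: "set_integrable lborel {a<..b} (\<lambda>_. k)" for k :: real
    by (rule set_integrable_subset[OF borel_integrable_atLeastAtMost'[of a b "\<lambda>_. k"]]) auto
  have m: "measure lborel {a<..b} = b - a" using assms by simp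
  have cst: "(LINT t:{a<..b}|lborel. k) = (b - a) * k" for k :: real
    using assms by (subst set_integral_const) auto
  have hb: "c - \<epsilon> \<le> ?f t \<and> ?f t \<le> c + \<epsilon>" if "t \<in> {a<..b}" for t
    using assms(8)[of t] that by (auto simp: abs_le_iff)
  have "(LINT t:{a<..b}|lborel. ?f t) \<le> (LINT t:{a<..b}|lborel. c + \<epsilon>)"
    by (rule set_integral_mono[OF fi ci]) (use hb in blast)
  moreover have "(LINT t:{a<..b}|lborel. c - \<epsilon>) \<le> (LINT t:{a<..b}|lborel. ?f t)"
    by (rule set_integral_mono[OF ci fi]) (use hb in blast)
  ultimately show ?thesis
    unfolding kernel_integral[OF assms(1-7)] cst by (auto simp: abs_le_iff algebra_simps)
qed

lemma kernel_unif_cont: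
  assumes "continuous_markov_kernel_of A KA" "\<epsilon> > 0"
  shows "\<exists>\<delta>>0. \<forall>t w t' w'. t \<in> {0..1} \<longrightarrow> w \<in> {0..1} \<longrightarrow> t' \<in> {0..1} \<longrightarrow> w' \<in> {0..1} \<longrightarrow>
     \<bar>t - t'\<bar> < \<delta> \<longrightarrow> \<bar>w - w'\<bar> < \<delta> \<longrightarrow> \<bar>measure (KA t) {0..w} - measure (KA t') {0..w'}\<bar> < \<epsilon>"
proof -
  have "uniformly_continuous_on ({0..1} \<times> {0..1}) (\<lambda>(x,y). measure (KA x) {0..y})"
    by (rule compact_uniformly_continuous[OF kernel_cont[OF assms(1)]]) (intro compact_Times compact_Icc)
  then obtain d where d: "d > 0" and
    hd: "\<And>p p'. p \<in> {0..1} \<times> {0..1} \<Longrightarrow> p' \<in> {0..1} \<times> {0..1} \<Longrightarrow> dist p' p < d \<Longrightarrow>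
       dist ((\<lambda>(x,y). measure (KA x) {0..y}) p') ((\<lambda>(x,y). measure (KA x) {0..y}) p) < \<epsilon>"
    unfolding uniformly_continuous_on_def using assms(2) by metis
  show ?thesis
  proof (intro exI[of _ "d/2"] conjI allI impI)
    fix t w t' w' :: real
    assume h: "t \<in> {0..1}" "w \<in> {0..1}" "t' \<in> {0..1}" "w' \<in> {0..1}" "\<bar>t - t'\<bar> < d/2" "\<bar>w - w'\<bar> < d/2"
    have "dist (t, w) (t', w') \<le> dist t t' + dist w w'" unfolding dist_Pair_Pair by (rule sqrt_sum_squares_le_sum_abs[THEN order_trans]) simp
    also have "\<dots> < d" using h by (simp add: dist_real_def)
    finally have "dist (t, w) (t', w') < d" .
    then have "dist (measure (KA t) {0..w}) (measure (KA t') {0..w'}) < \<epsilon>"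
      using hd[of "(t', w')" "(t, w)"] h by auto
    then show "\<bar>measure (KA t) {0..w} - measure (KA t') {0..w'}\<bar> < \<epsilon>" by (simp add: dist_real_def)
  qed (use d in auto)
qed


lemma meas_Ioc: "measure lborel {l<..u::real} = max 0 (u - l)"
  by (cases "l \<le> u") (auto simp: measure_def)

lemma meas_Icc: "measure lborel {l..u::real} = max 0 (u - l)"
  by (cases "l \<le> u") (auto simp: measure_def)

lemma cb_weight:
  assumes "N \<ge> 1" "0 \<le> v" "j \<ge> 1"
  shows "real N * measure lborel ({0..v} \<inter> cb_int N j) = min 1 (max 0 (real N * v - real j + 1))"
proof (cases "j = 1")
  case True
  have "{0..v} \<inter> cb_int N j = {0..min v (1 / real N)}" using True by (auto simp: cb_int_def)
  then have "measure lborel ({0..v} \<inter> cb_int N j) = min v (1 / real N)"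
    using assms by (simp add: meas_Icc)
  then show ?thesis using True assms by (simp add: min_mult_distrib_left field_simps)
next
  case False
  then have j2: "j \<ge> 2" using assms by auto
  have p: "0 \<le> (real j - 1) / real N" using j2 by simp
  have "{0..v} \<inter> cb_int N j = {(real j - 1) / real N<..min v (real j / real N)}"
    using False p by (auto simp: cb_int_def)
  then have "measure lborel ({0..v} \<inter> cb_int N j) = max 0 (min v (real j / real N) - (real j - 1) / real N)"
    by (simp add: meas_Ioc)
  moreover have "real N * max 0 (min v (real j / real N) - (real j - 1) / real N) = max 0 (min (real N * v) (real j) - real j + 1)"
  proof -
    have Np: "real N > 0" using assms by simp
    have "real N * max 0 (min v (real j / real N) - (real j - 1) / real N) = max 0 (real N * (min v (real j / real N) - (real j - 1) / real N))"
      using Np by (simp add: max_mult_distrib_left)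
    also have "real N * (min v (real j / real N) - (real j - 1) / real N) = real N * min v (real j / real N) - (real j - 1)"
      using Np by (simp add: right_diff_distrib field_simps)
    also have "real N * min v (real j / real N) = min (real N * v) (real j)"
      using Np by (simp add: min_mult_distrib_left)
    finally show ?thesis by simp
  qed
  ultimately show ?thesis by (auto simp: min_def max_def)
qed

lemma cb_index:
  assumes "N \<ge> 1" "0 \<le> u" "u \<le> 1"
  shows "\<exists>i\<in>{1..N}. (real i - 1) / real N \<le> u \<and> u \<le> real i / real N \<and> (\<forall>i'\<in>{1..N}. u \<in> cb_int N i' \<longleftrightarrow> i' = i)"
proof -
  have Np: "real N > 0" using assms by simp
  have uniq: "i = i'" if "i \<in> {1..N}" "i' \<in> {1..N}" "u \<in> cb_int N i" "u \<in> cb_int N i'" for i i'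
  proof (rule ccontr)
    assume "i \<noteq> i'"
    then consider "i < i'" | "i' < i" by linarith
    then show False
    proof cases
      case 1
      then have "real i \<le> real i' - 1" by simp
      then have "real i / real N \<le> (real i' - 1) / real N" using Np by (simp add: divide_right_mono)
      then show False using that 1 by (auto simp: cb_int_def split: if_splits)
    next
      case 2
      then have "real i' \<le> real i - 1" by simp
      then have "real i' / real N \<le> (real i - 1) / real N" using Np by (simp add: divide_right_mono)
      then show False using that 2 by (auto simp: cb_int_def split: if_splits)
    qed
  qed
  define c where "c = \<lceil>real N * u\<rceil>"
  have c1: "real_of_int c - 1 < real N * u" "real N * u \<le> real_of_int c" unfolding c_def by linarith+
  have nu: "0 \<le> real N * u" "real N * u \<le> real N" using assms Np by (auto simp: mult_le_cancel_left1)
  have c0: "0 \<le> c" "c \<le> int N" unfolding c_def using nu by (auto intro!: ceiling_le)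
  show ?thesis
  proof (cases "c \<le> 1")
    case True
    have "u \<le> 1 / real N" using c1 True Np by (simp add: field_simps)
    then have "u \<in> cb_int N 1" using assms by (auto simp: cb_int_def)
    then show ?thesis using uniq[of 1] assms \<open>u \<le> 1 / real N\<close> by (intro bexI[of _ 1]) (auto simp del: One_nat_def)
  next
    case False
    define i where "i = nat c"
    have ic: "real i = real_of_int c" using c0 unfolding i_def by simp
    have i2: "i \<ge> 2" "i \<le> N" using False c0 unfolding i_def by auto
    have "(real i - 1) / real N < u" "u \<le> real i / real N" using c1 Np unfolding ic by (simp_all add: field_simps)
    then have "u \<in> cb_int N i" using i2 by (auto simp: cb_int_def)
    moreover have "\<forall>i'\<in>{1..N}. u \<in> cb_int N i' \<longleftrightarrow> i' = i"
    proof (intro ballI iffI)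
      fix i' assume "i' \<in> {1..N}" "u \<in> cb_int N i'"
      then show "i' = i" using uniq[of i' i] i2 \<open>u \<in> cb_int N i\<close> by auto
    qed (use \<open>u \<in> cb_int N i\<close> in auto)
    ultimately show ?thesis using i2 \<open>(real i - 1) / real N < u\<close> \<open>u \<le> real i / real N\<close>
      by (intro bexI[of _ i]) auto
  qed
qed

lemma sum_by_parts_nat:
  fixes g \<psi> :: "nat \<Rightarrow> real"
  assumes "g 0 = 0"
  shows "(\<Sum>j\<in>{1..M}. (g j - g (j - 1)) * \<psi> j) = (\<Sum>j\<in>{1..M}. g j * (\<psi> j - \<psi> (j + 1))) + g M * \<psi> (M + 1)"
proof (induction M)
  case 0 then show ?case using assms by simp
next
  case (Suc M)
  have "(\<Sum>j\<in>{1..Suc M}. (g j - g (j - 1)) * \<psi> j) = (\<Sum>j\<in>{1..M}. (g j - g (j - 1)) * \<psi> j) + (g (Suc M) - g M) * \<psi> (Suc M)"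
    by simp
  also have "\<dots> = (\<Sum>j\<in>{1..Suc M}. g j * (\<psi> j - \<psi> (j + 1))) + g (Suc M) * \<psi> (Suc M + 1)"
    using Suc by (simp add: algebra_simps)
  finally show ?case .
qed

lemma cb_kernel_eq:
  assumes "N \<ge> 1" "i \<in> {1..N}" "\<forall>i'\<in>{1..N}. u \<in> cb_int N i' \<longleftrightarrow> i' = i"
  shows "cb_kernel N B u v = (\<Sum>j\<in>{1..N}.
     (real N * (B (real i / real N) (real j / real N) - B ((real i - 1) / real N) (real j / real N))
    - real N * (B (real i / real N) (real (j - 1) / real N) - B ((real i - 1) / real N) (real (j - 1) / real N)))
     * (real N * measure lborel ({0..v} \<inter> cb_int N j)))"
proof -
  have ind: "indicator (cb_int N i') u = (if i' = i then 1 else (0::real))" if "i' \<in> {1..N}" for i'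
    using assms(3) that by (auto simp: indicator_def)
  have "cb_kernel N B u v = real N ^ 2 * (\<Sum>i'\<in>{1..N}. \<Sum>j\<in>{1..N}.
        (if i' = i then cb_mass N B i' j * measure lborel ({0..v} \<inter> cb_int N j) else 0))"
    unfolding cb_kernel_def by (intro arg_cong2[where f="(*)"] refl sum.cong) (auto simp: ind)
  also have "\<dots> = real N ^ 2 * (\<Sum>j\<in>{1..N}. cb_mass N B i j * measure lborel ({0..v} \<inter> cb_int N j))"
  proof -
    have "(\<Sum>i'\<in>{1..N}. \<Sum>j\<in>{1..N}.
        (if i' = i then cb_mass N B i' j * measure lborel ({0..v} \<inter> cb_int N j) else 0))
      = (\<Sum>i'\<in>{1..N}. if i' = i then (\<Sum>j\<in>{1..N}. cb_mass N B i' j * measure lborel ({0..v} \<inter> cb_int N j)) else 0)"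
      by (rule sum.cong) auto
    then show ?thesis using assms(2) by (simp only: sum.delta' finite_atLeastAtMost) simp
  qed
  also have "\<dots> = (\<Sum>j\<in>{1..N}. (real N * cb_mass N B i j) * (real N * measure lborel ({0..v} \<inter> cb_int N j)))"
    by (simp add: sum_distrib_left power2_eq_square mult_ac)
  finally have e: "cb_kernel N B u v = (\<Sum>j\<in>{1..N}. (real N * cb_mass N B i j) * (real N * measure lborel ({0..v} \<inter> cb_int N j)))" .
  show ?thesis unfolding e
    by (intro sum.cong refl arg_cong2[where f="(*)"]) (auto simp: cb_mass_def of_nat_diff algebra_simps)
qed


lemma cb_kernel_bound:
  assumes N1: "N \<ge> 1" and u: "0 \<le> u" "u \<le> 1" and v: "0 \<le> v" "v \<le> 1"
    and hB0: "\<And>i. i \<in> {1..N} \<Longrightarrow> B (real i / real N) 0 = B ((real i - 1) / real N) 0"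
    and hg: "\<And>i j. i \<in> {1..N} \<Longrightarrow> (real i - 1) / real N \<le> u \<Longrightarrow> u \<le> real i / real N \<Longrightarrow> j \<le> N \<Longrightarrow>
       \<bar>real j / real N - v\<bar> \<le> 1 / real N \<Longrightarrow>
       \<bar>real N * (B (real i / real N) (real j / real N) - B ((real i - 1) / real N) (real j / real N)) - c\<bar> \<le> \<delta>"
  shows "\<bar>cb_kernel N B u v - c\<bar> \<le> \<delta>"
proof -
  have Np: "real N > 0" using N1 by simp
  obtain i where i: "i \<in> {1..N}" "(real i - 1) / real N \<le> u" "u \<le> real i / real N"
    "\<forall>i'\<in>{1..N}. u \<in> cb_int N i' \<longleftrightarrow> i' = i"
    using cb_index[OF N1 u] by blast
  define g where "g j = real N * (B (real i / real N) (real j / real N) - B ((real i - 1) / real N) (real j / real N))" for j :: nat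
  define \<psi> where "\<psi> j = real N * measure lborel ({0..v} \<inter> cb_int N j)" for j
  have \<psi>f: "\<psi> j = min 1 (max 0 (real N * v - real j + 1))" if "j \<ge> 1" for j
    unfolding \<psi>_def using cb_weight[OF N1 v(1) that] .
  have g0: "g 0 = 0" unfolding g_def using hB0[OF i(1)] by simp
  have "cb_kernel N B u v = (\<Sum>j\<in>{1..N}. (g j - g (j - 1)) * \<psi> j)"
    unfolding cb_kernel_eq[OF N1 i(1) i(4)] g_def \<psi>_def ..
  also have "\<dots> = (\<Sum>j\<in>{1..N}. g j * (\<psi> j - \<psi> (j + 1))) + g N * \<psi> (N + 1)"
    by (rule sum_by_parts_nat[where g=g, OF g0])
  also have "\<psi> (N + 1) = 0" using \<psi>f[of "N+1"] v Np by (simp add: mult_le_cancel_left1)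
  finally have k: "cb_kernel N B u v = (\<Sum>j\<in>{1..N}. g j * (\<psi> j - \<psi> (j + 1)))" by simp
  have wpos: "0 \<le> \<psi> j - \<psi> (j + 1)" if "j \<ge> 1" for j
    using \<psi>f[of j] \<psi>f[of "j+1"] that by (auto simp: min_def max_def)
  have wsupp: "\<bar>real j / real N - v\<bar> \<le> 1 / real N" if "j \<ge> 1" "\<psi> j - \<psi> (j + 1) \<noteq> 0" for j
  proof -
    have "real N * v < real j + 1" "real N * v > real j - 1"
      using \<psi>f[of j] \<psi>f[of "j+1"] that by (auto simp: min_def max_def split: if_splits)
    then have "\<bar>real j - real N * v\<bar> \<le> 1" by linarith
    then have "\<bar>(real j - real N * v) / real N\<bar> \<le> 1 / real N" using Np by (simp add: divide_right_mono)
    moreover have "(real j - real N * v) / real N = real j / real N - v" using Np by (simp add: field_simps)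
    ultimately show ?thesis by simp
  qed
  have tel: "(\<Sum>j\<in>{1..N}. \<psi> j - \<psi> (j + 1)) = \<psi> 1 - \<psi> (N + 1)"
    using N1 by (induction N rule: nat_induct_at_least) auto
  have \<psi>1: "\<psi> 1 = min 1 (real N * v)" using \<psi>f[of 1] v Np by simp
  have sumw: "(\<Sum>j\<in>{1..N}. \<psi> j - \<psi> (j + 1)) = \<psi> 1"
    using tel \<psi>f[of "N+1"] v Np by (simp add: mult_le_cancel_left1)
  have "(\<Sum>j\<in>{1..N}. g j * (\<psi> j - \<psi> (j + 1))) - c =
        (\<Sum>j\<in>{1..N}. (g j - c) * (\<psi> j - \<psi> (j + 1))) - c * (1 - \<psi> 1)"
  proof -
    have "(\<Sum>j\<in>{1..N}. (g j - c) * (\<psi> j - \<psi> (j + 1))) = (\<Sum>j\<in>{1..N}. g j * (\<psi> j - \<psi> (j + 1))) - c * (\<Sum>j\<in>{1..N}. \<psi> j - \<psi> (j + 1))"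
    proof -
      have e1: "(\<Sum>j\<in>{1..N}. (g j - c) * (\<psi> j - \<psi> (j + 1))) = (\<Sum>j\<in>{1..N}. g j * (\<psi> j - \<psi> (j + 1))) - (\<Sum>j\<in>{1..N}. c * (\<psi> j - \<psi> (j + 1)))"
        by (simp only: left_diff_distrib sum_subtractf)
      have e2: "(\<Sum>j\<in>{1..N}. c * (\<psi> j - \<psi> (j + 1))) = c * (\<Sum>j\<in>{1..N}. \<psi> j - \<psi> (j + 1))"
        by (rule sum_distrib_left[symmetric])
      show ?thesis using e1 e2 by simp
    qed
    then show ?thesis unfolding sumw by (simp add: algebra_simps)
  qed
  moreover have "\<bar>\<Sum>j\<in>{1..N}. (g j - c) * (\<psi> j - \<psi> (j + 1))\<bar> \<le> \<delta> * \<psi> 1"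
  proof -
    have "\<bar>\<Sum>j\<in>{1..N}. (g j - c) * (\<psi> j - \<psi> (j + 1))\<bar> \<le> (\<Sum>j\<in>{1..N}. \<bar>(g j - c) * (\<psi> j - \<psi> (j + 1))\<bar>)"
      by (rule sum_abs)
    also have "\<dots> \<le> (\<Sum>j\<in>{1..N}. \<delta> * (\<psi> j - \<psi> (j + 1)))"
    proof (rule sum_mono)
      fix j assume j: "j \<in> {1..N}"
      show "\<bar>(g j - c) * (\<psi> j - \<psi> (j + 1))\<bar> \<le> \<delta> * (\<psi> j - \<psi> (j + 1))"
      proof (cases "\<psi> j - \<psi> (j + 1) = 0")
        case True then show ?thesis by simp
      next
        case False
        have "\<bar>g j - c\<bar> \<le> \<delta>" unfolding g_def using hg[OF i(1-3), of j] j wsupp[OF _ False] by auto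
        then show ?thesis using wpos[of j] j by (simp add: abs_mult mult_right_mono)
      qed
    qed
    also have "\<dots> = \<delta> * \<psi> 1" using sumw by (simp only: sum_distrib_left[symmetric])
    finally show ?thesis .
  qed
  moreover have "\<bar>c * (1 - \<psi> 1)\<bar> \<le> \<delta> * (1 - \<psi> 1)"
  proof (cases "\<psi> 1 = 1")
    case True then show ?thesis by simp
  next
    case False
    then have "real N * v < 1" using \<psi>1 by (auto simp: min_def split: if_splits)
    then have "\<bar>real 0 / real N - v\<bar> \<le> 1 / real N" using v Np by (simp add: field_simps)
    then have "\<bar>g 0 - c\<bar> \<le> \<delta>" unfolding g_def using hg[OF i(1-3), of 0] by auto
    then have "\<bar>c\<bar> \<le> \<delta>" using g0 by simp
    moreover have "0 \<le> 1 - \<psi> 1" using \<psi>1 by simp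
    ultimately show ?thesis by (simp add: abs_mult mult_right_mono)
  qed
  moreover have "0 \<le> \<psi> 1" using \<psi>1 v Np by simp
  ultimately have "\<bar>(\<Sum>j\<in>{1..N}. g j * (\<psi> j - \<psi> (j + 1))) - c\<bar> \<le> \<delta> * \<psi> 1 + \<delta> * (1 - \<psi> 1)"
    by linarith
  then show ?thesis unfolding k by (simp add: algebra_simps)
qed


definition rk :: "(nat \<Rightarrow> real) \<Rightarrow> nat \<Rightarrow> nat \<Rightarrow> nat" where
  "rk x n k = card {l. l < n \<and> x l \<le> x k}"

lemma rk_ge1: "k < n \<Longrightarrow> rk x n k \<ge> 1"
proof -
  assume "k < n"
  then have "0 < card {l. l < n \<and> x l \<le> x k}" by (subst card_gt_0_iff) auto
  then show ?thesis unfolding rk_def by simp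
qed

lemma rk_le: "rk x n k \<le> n"
  unfolding rk_def by (rule order.trans[OF card_mono[of "{..<n}"]]) auto

lemma rk_iff:
  assumes "l < n"
  shows "rk x n l \<le> rk x n k \<longleftrightarrow> x l \<le> x k"
proof
  assume "x l \<le> x k"
  then show "rk x n l \<le> rk x n k" unfolding rk_def by (intro card_mono) auto
next
  assume h: "rk x n l \<le> rk x n k"
  show "x l \<le> x k"
  proof (rule ccontr)
    assume "\<not> x l \<le> x k"
    then have "{l'. l' < n \<and> x l' \<le> x k} \<subset> {l'. l' < n \<and> x l' \<le> x l}" using assms by auto
    then have "rk x n k < rk x n l" unfolding rk_def by (intro psubset_card_mono) auto
    then show False using h by simp
  qed
qed

lemma rk_surj:
  assumes "inj_on x {..<n}" "i \<in> {1..n}"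
  shows "\<exists>k<n. rk x n k = i"
proof -
  have inj: "inj_on (rk x n) {..<n}"
  proof (rule inj_onI)
    fix k k' assume k: "k \<in> {..<n}" "k' \<in> {..<n}" "rk x n k = rk x n k'"
    then have "x k \<le> x k'" "x k' \<le> x k" using rk_iff[of k n x k'] rk_iff[of k' n x k] by auto
    then have "x k = x k'" by simp
    then show "k = k'" using assms(1) k by (auto dest: inj_onD)
  qed
  have sub: "rk x n ` {..<n} \<subseteq> {1..n}" using rk_ge1 rk_le by auto
  have "card (rk x n ` {..<n}) = card {1..n}" using card_image[OF inj] by simp
  then have "rk x n ` {..<n} = {1..n}" using sub by (intro card_subset_eq) auto
  then have "i \<in> rk x n ` {..<n}" using assms(2) by simp
  then show ?thesis by auto
qed

definition Hemp :: "(nat \<Rightarrow> real) \<Rightarrow> (nat \<Rightarrow> real) \<Rightarrow> nat \<Rightarrow> real \<Rightarrow> real \<Rightarrow> real" where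
  "Hemp x y n a b = card {l. l < n \<and> x l \<le> a \<and> y l \<le> b} / real n"

lemma emp_df_range: "0 \<le> emp_df x n a" "emp_df x n a \<le> 1"
proof -
  show "0 \<le> emp_df x n a" unfolding emp_df_def by simp
  have "card {k. k < n \<and> x k \<le> a} \<le> n" by (rule order.trans[OF card_mono[of "{..<n}"]]) auto
  then show "emp_df x n a \<le> 1" unfolding emp_df_def by (cases "n = 0") (auto simp: divide_le_eq_1)
qed

lemma subcop_zero1: "emp_subcopula x y n 0 j = 0"
proof -
  have "{k. k < n \<and> card {l. l < n \<and> x l \<le> x k} \<le> 0 \<and> card {l. l < n \<and> y l \<le> y k} \<le> j} = {}"
    using rk_ge1[of _ n x] unfolding rk_def by fastforce
  then show ?thesis unfolding emp_subcopula_def by simp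
qed

lemma subcop_zero2: "emp_subcopula x y n i 0 = 0"
proof -
  have "{k. k < n \<and> card {l. l < n \<and> x l \<le> x k} \<le> i \<and> card {l. l < n \<and> y l \<le> y k} \<le> 0} = {}"
    using rk_ge1[of _ n y] unfolding rk_def by fastforce
  then show ?thesis unfolding emp_subcopula_def by simp
qed

lemma subcop_bound:
  assumes A: "is_copula A" and injx: "inj_on x {..<n}" and injy: "inj_on y {..<n}"
    and HA: "\<And>a b. H a b = A (F a) (G b)"
    and F01: "\<And>a. F a \<in> {0..1}" and G01: "\<And>b. G b \<in> {0..1}"
    and dH: "\<And>a b. \<bar>Hemp x y n a b - H a b\<bar> \<le> \<delta>"
    and dF: "\<And>a. \<bar>emp_df x n a - F a\<bar> \<le> \<delta>"
    and dG: "\<And>b. \<bar>emp_df y n b - G b\<bar> \<le> \<delta>"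
    and ij: "i \<le> n" "j \<le> n"
  shows "\<bar>emp_subcopula x y n i j - A (real i / real n) (real j / real n)\<bar> \<le> 3 * \<delta>"
proof -
  have d0: "0 \<le> \<delta>" using dF[of 0] by simp
  show ?thesis
  proof (cases "i = 0 \<or> j = 0")
    case True
    have "real j / real n \<in> {0..1}" "real i / real n \<in> {0..1}" using ij by (cases "n = 0", auto simp: divide_le_eq_1)+
    then show ?thesis using True subcop_zero1 subcop_zero2 copula_ground[OF A] d0 ij
      by auto
  next
    case False
    then obtain k k' where k: "k < n" "rk x n k = i" and k': "k' < n" "rk y n k' = j"
      using rk_surj[OF injx, of i] rk_surj[OF injy, of j] ij by auto
    have "{l. l < n \<and> card {l'. l' < n \<and> x l' \<le> x l} \<le> i \<and> card {l'. l' < n \<and> y l' \<le> y l} \<le> j}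
        = {l. l < n \<and> x l \<le> x k \<and> y l \<le> y k'}"
      using rk_iff[of _ n x k] rk_iff[of _ n y k'] k k' unfolding rk_def by auto
    then have e1: "emp_subcopula x y n i j = Hemp x y n (x k) (y k')"
      unfolding emp_subcopula_def Hemp_def by simp
    have e2: "real i / real n = emp_df x n (x k)" "real j / real n = emp_df y n (y k')"
      using k k' unfolding emp_df_def rk_def by auto
    have "\<bar>A (F (x k)) (G (y k')) - A (emp_df x n (x k)) (emp_df y n (y k'))\<bar> \<le>
          \<bar>F (x k) - emp_df x n (x k)\<bar> + \<bar>G (y k') - emp_df y n (y k')\<bar>"
      by (rule copula_lip[OF A F01 _ G01]) (use emp_df_range in auto)
    then show ?thesis unfolding e1 e2 using dH[of "x k" "y k'"] dF[of "x k"] dG[of "y k'"] HA[of "x k" "y k'"]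
      by (simp add: abs_minus_commute)
  qed
qed

lemma convex4:
  fixes t s :: real
  assumes "0 \<le> t" "t \<le> 1" "0 \<le> s" "s \<le> 1"
    and "\<bar>c1 - z\<bar> \<le> e" "\<bar>c2 - z\<bar> \<le> e" "\<bar>c3 - z\<bar> \<le> e" "\<bar>c4 - z\<bar> \<le> e"
  shows "\<bar>(1 - t) * (1 - s) * c1 + t * (1 - s) * c2 + (1 - t) * s * c3 + t * s * c4 - z\<bar> \<le> e"
proof -
  have w: "0 \<le> (1 - t) * (1 - s)" "0 \<le> t * (1 - s)" "0 \<le> (1 - t) * s" "0 \<le> t * s" using assms by auto
  have "(1 - t) * (1 - s) * c1 + t * (1 - s) * c2 + (1 - t) * s * c3 + t * s * c4 - z =
    (1 - t) * (1 - s) * (c1 - z) + t * (1 - s) * (c2 - z) + (1 - t) * s * (c3 - z) + t * s * (c4 - z)"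
    by (simp add: algebra_simps)
  also have "\<bar>\<dots>\<bar> \<le> (1 - t) * (1 - s) * e + t * (1 - s) * e + (1 - t) * s * e + t * s * e"
  proof -
    have b: "\<bar>w * (c - z)\<bar> \<le> w * e" if "0 \<le> w" "\<bar>c - z\<bar> \<le> e" for w c
      using that by (simp add: abs_mult mult_left_mono)
    show ?thesis using b[OF w(1) assms(5)] b[OF w(2) assms(6)] b[OF w(3) assms(7)] b[OF w(4) assms(8)]
      by (smt (verit, best))
  qed
  also have "\<dots> = e" by (simp add: algebra_simps)
  finally show ?thesis .
qed


lemma bil_index:
  assumes "n \<ge> 1" "0 \<le> u" "u \<le> 1"
  defines "a \<equiv> min (n - 1) (nat \<lfloor>real n * u\<rfloor>)"
  shows "0 \<le> real n * u - real a" "real n * u - real a \<le> 1" "a + 1 \<le> n"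
    "\<bar>real a / real n - u\<bar> \<le> 1 / real n" "\<bar>real (a + 1) / real n - u\<bar> \<le> 1 / real n"
proof -
  have Np: "real n > 0" using assms by simp
  have nu: "0 \<le> real n * u" "real n * u \<le> real n" using assms Np by (auto simp: mult_le_cancel_left1)
  have fl: "real (nat \<lfloor>real n * u\<rfloor>) \<le> real n * u" "real n * u < real (nat \<lfloor>real n * u\<rfloor>) + 1"
    using nu by linarith+
  show t0: "0 \<le> real n * u - real a"
    unfolding a_def using fl by (cases "n - 1 \<le> nat \<lfloor>real n * u\<rfloor>") (auto simp: min_def)
  show t1: "real n * u - real a \<le> 1"
  proof (cases "n - 1 \<le> nat \<lfloor>real n * u\<rfloor>")
    case True
    then have "a = n - 1" unfolding a_def by simp
    then show ?thesis using nu assms(1) by (simp add: of_nat_diff)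
  next
    case False
    then have "a = nat \<lfloor>real n * u\<rfloor>" unfolding a_def by simp
    then show ?thesis using fl by linarith
  qed
  show "a + 1 \<le> n" unfolding a_def using assms(1) by simp
  have "u - real a / real n = (real n * u - real a) / real n" using Np by (simp add: field_simps)
  then show "\<bar>real a / real n - u\<bar> \<le> 1 / real n" using t0 t1 Np by (simp add: divide_right_mono abs_minus_commute)
  have "real (a + 1) / real n - u = (1 - (real n * u - real a)) / real n" using Np by (simp add: field_simps)
  then show "\<bar>real (a + 1) / real n - u\<bar> \<le> 1 / real n" using t0 t1 Np by (simp add: divide_right_mono)
qed

lemma empcop_zero: "emp_copula x y n u 0 = 0"
  unfolding emp_copula_def bilinear_ext_def Let_def by (simp add: subcop_zero2)

lemma empcop_bound:
  assumes A: "is_copula A" and injx: "inj_on x {..<n}" and injy: "inj_on y {..<n}"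
    and HA: "\<And>a b. H a b = A (F a) (G b)"
    and F01: "\<And>a. F a \<in> {0..1}" and G01: "\<And>b. G b \<in> {0..1}"
    and dH: "\<And>a b. \<bar>Hemp x y n a b - H a b\<bar> \<le> \<delta>"
    and dF: "\<And>a. \<bar>emp_df x n a - F a\<bar> \<le> \<delta>"
    and dG: "\<And>b. \<bar>emp_df y n b - G b\<bar> \<le> \<delta>"
    and n1: "n \<ge> 1" and u: "0 \<le> u" "u \<le> 1" and v: "0 \<le> v" "v \<le> 1"
  shows "\<bar>emp_copula x y n u v - A u v\<bar> \<le> 3 * \<delta> + 2 / real n"
proof -
  define a where "a = min (n - 1) (nat \<lfloor>real n * u\<rfloor>)"
  define b where "b = min (n - 1) (nat \<lfloor>real n * v\<rfloor>)"
  note ia = bil_index[OF n1 u, folded a_def]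
  note ib = bil_index[OF n1 v, folded b_def]
  have Np: "real n > 0" using n1 by simp
  have key: "\<bar>emp_subcopula x y n p q - A u v\<bar> \<le> 3 * \<delta> + 2 / real n"
    if "p \<le> n" "q \<le> n" "\<bar>real p / real n - u\<bar> \<le> 1 / real n" "\<bar>real q / real n - v\<bar> \<le> 1 / real n" for p q
  proof -
    have "\<bar>emp_subcopula x y n p q - A (real p / real n) (real q / real n)\<bar> \<le> 3 * \<delta>"
      by (rule subcop_bound[OF A injx injy HA F01 G01 dH dF dG that(1,2)])
    moreover have "\<bar>A (real p / real n) (real q / real n) - A u v\<bar> \<le> \<bar>real p / real n - u\<bar> + \<bar>real q / real n - v\<bar>"
      by (rule copula_lip[OF A]) (use that u v Np in \<open>auto simp: divide_le_eq_1\<close>)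
    ultimately show ?thesis using that by (simp add: add_divide_distrib[symmetric])
  qed
  show ?thesis
    unfolding emp_copula_def bilinear_ext_def Let_def a_def[symmetric] b_def[symmetric]
    by (rule convex4[OF ia(1,2) ib(1,2)]; rule key; use ia ib in auto)
qed


lemma tri3:
  fixes N b1 b0 a1 a0 c :: real
  assumes "N \<ge> 0"
  shows "\<bar>N * (b1 - b0) - c\<bar> \<le> N * \<bar>b1 - a1\<bar> + N * \<bar>b0 - a0\<bar> + \<bar>N * (a1 - a0) - c\<bar>"
proof -
  have "N * (b1 - b0) - c = N * (b1 - a1) - N * (b0 - a0) + (N * (a1 - a0) - c)" by (simp add: algebra_simps)
  then have "\<bar>N * (b1 - b0) - c\<bar> \<le> \<bar>N * (b1 - a1)\<bar> + \<bar>N * (b0 - a0)\<bar> + \<bar>N * (a1 - a0) - c\<bar>" by linarith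
  then show ?thesis using assms by (simp add: abs_mult)
qed

lemma bound_at_n:
  assumes A: "is_copula A" and K: "continuous_markov_kernel_of A KA"
    and injx: "inj_on x {..<n}" and injy: "inj_on y {..<n}"
    and HA: "\<And>a b. H a b = A (F a) (G b)"
    and F01: "\<And>a. F a \<in> {0..1}" and G01: "\<And>b. G b \<in> {0..1}"
    and dH: "\<And>a b. \<bar>Hemp x y n a b - H a b\<bar> \<le> \<delta>"
    and dF: "\<And>a. \<bar>emp_df x n a - F a\<bar> \<le> \<delta>"
    and dG: "\<And>b. \<bar>emp_df y n b - G b\<bar> \<le> \<delta>"
    and n1: "n \<ge> 1" and N1: "N \<ge> 1"
    and d0: "\<And>t w t' w'. t \<in> {0..1} \<Longrightarrow> w \<in> {0..1} \<Longrightarrow> t' \<in> {0..1} \<Longrightarrow> w' \<in> {0..1} \<Longrightarrow>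
     \<bar>t - t'\<bar> < \<delta>0 \<Longrightarrow> \<bar>w - w'\<bar> < \<delta>0 \<Longrightarrow> \<bar>measure (KA t) {0..w} - measure (KA t') {0..w'}\<bar> < \<epsilon>"
    and small: "1 / real N + \<delta> < \<delta>0"
  shows "\<bar>cb_kernel N (emp_copula x y n) (emp_df x n a) (emp_df y n b) - measure (KA (F a)) {0..G b}\<bar>
     \<le> 2 * real N * (3 * \<delta> + 2 / real n) + \<epsilon>"
proof -
  define B where "B = emp_copula x y n"
  define e where "e = 3 * \<delta> + 2 / real n"
  define c where "c = measure (KA (F a)) {0..G b}"
  have Np: "real N > 0" using N1 by simp
  have eB: "\<bar>B p q - A p q\<bar> \<le> e" if "p \<in> {0..1}" "q \<in> {0..1}" for p q
    unfolding B_def e_def using empcop_bound[OF A injx injy HA F01 G01 dH dF dG n1] that by auto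
  note u = emp_df_range[of x n a] and v = emp_df_range[of y n b]
  have grid: "real i / real N \<in> {0..1}" if "i \<le> N" for i
    using that Np by (auto simp: divide_le_eq_1)
  have grid': "(real i - 1) / real N \<in> {0..1}" if "i \<in> {1..N}" for i
    using that Np by (auto simp: divide_le_eq_1)
  show ?thesis unfolding B_def[symmetric] c_def[symmetric] e_def[symmetric]
  proof (rule cb_kernel_bound[OF N1 u v])
    fix i assume "i \<in> {1..N}"
    then show "B (real i / real N) 0 = B ((real i - 1) / real N) 0" unfolding B_def by (simp add: empcop_zero)
  next
    fix i j assume i: "i \<in> {1..N}" "(real i - 1) / real N \<le> emp_df x n a" "emp_df x n a \<le> real i / real N"
      and j: "j \<le> N" "\<bar>real j / real N - emp_df y n b\<bar> \<le> 1 / real N"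
    have i1: "real i / real N \<in> {0..1}" using grid i by auto
    have i0: "(real i - 1) / real N \<in> {0..1}" using grid' i by auto
    have j1: "real j / real N \<in> {0..1}" using grid j by auto
    have avg: "\<bar>(A (real i / real N) (real j / real N) - A ((real i - 1) / real N) (real j / real N))
        - (real i / real N - (real i - 1) / real N) * c\<bar> \<le> (real i / real N - (real i - 1) / real N) * \<epsilon>"
    proof (rule kernel_average[OF A K])
      show "0 \<le> (real i - 1) / real N" "(real i - 1) / real N \<le> real i / real N" "real i / real N \<le> 1"
        "0 \<le> real j / real N" "real j / real N \<le> 1" using i0 i1 j1 Np by (auto simp: divide_right_mono)
    next
      fix t assume t: "t \<in> {(real i - 1) / real N..real i / real N}"
      have "\<bar>t - emp_df x n a\<bar> \<le> 1 / real N"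
      proof -
        have "real i / real N - (real i - 1) / real N = 1 / real N" using Np by (simp add: field_simps)
        then show ?thesis using t i by auto
      qed
      then have "\<bar>t - F a\<bar> < \<delta>0" using dF[of a] small by linarith
      moreover have "\<bar>real j / real N - G b\<bar> < \<delta>0" using j dG[of b] small by linarith
      moreover have "t \<in> {0..1}" using t i0 i1 by auto
      ultimately have "\<bar>measure (KA t) {0..real j / real N} - c\<bar> < \<epsilon>"
        unfolding c_def using d0[of t "real j / real N" "F a" "G b"] j1 F01 G01 by auto
      then show "\<bar>measure (KA t) {0..real j / real N} - c\<bar> \<le> \<epsilon>" by simp
    qed
    have len: "real i / real N - (real i - 1) / real N = 1 / real N" using Np by (simp add: field_simps)
    have sc: "\<bar>real N * X - c\<bar> \<le> \<epsilon>" if "\<bar>X - 1 / real N * c\<bar> \<le> 1 / real N * \<epsilon>" for X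
    proof -
      have "real N * X - c = real N * (X - 1 / real N * c)" using Np by (simp add: field_simps)
      then have "\<bar>real N * X - c\<bar> = real N * \<bar>X - 1 / real N * c\<bar>" using Np by (simp add: abs_mult)
      also have "\<dots> \<le> real N * (1 / real N * \<epsilon>)" using that Np by (intro mult_left_mono) auto
      also have "\<dots> = \<epsilon>" using Np by simp
      finally show ?thesis .
    qed
    have avg2: "\<bar>real N * (A (real i / real N) (real j / real N) - A ((real i - 1) / real N) (real j / real N)) - c\<bar> \<le> \<epsilon>"
      by (rule sc) (use avg len in simp)
    have "\<bar>real N * (B (real i / real N) (real j / real N) - B ((real i - 1) / real N) (real j / real N)) - c\<bar>
       \<le> real N * \<bar>B (real i / real N) (real j / real N) - A (real i / real N) (real j / real N)\<bar>
         + real N * \<bar>B ((real i - 1) / real N) (real j / real N) - A ((real i - 1) / real N) (real j / real N)\<bar>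
         + \<bar>real N * (A (real i / real N) (real j / real N) - A ((real i - 1) / real N) (real j / real N)) - c\<bar>"
      using Np by (intro tri3) simp
    also have "\<dots> \<le> real N * e + real N * e + \<epsilon>"
      using eB[OF i1 j1] eB[OF i0 j1] avg2 Np by (intro add_mono mult_left_mono) auto
    finally show "\<bar>real N * (B (real i / real N) (real j / real N) - B ((real i - 1) / real N) (real j / real N)) - c\<bar>
       \<le> 2 * real N * e + \<epsilon>" by (simp add: mult_ac)
  qed
qed


lemma det_limit:
  assumes A: "is_copula A" and K: "continuous_markov_kernel_of A KA"
    and injx: "inj x" and injy: "inj y"
    and HA: "\<And>a b. H a b = A (F a) (G b)"
    and F01: "\<And>a. F a \<in> {0..1}" and G01: "\<And>b. G b \<in> {0..1}"
    and Ninf: "filterlim N at_top sequentially"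
    and Nn: "(\<lambda>n. real (N n) / real n) \<longlonglongrightarrow> 0"
    and rate: "\<And>\<epsilon>. \<epsilon> > 0 \<Longrightarrow> eventually (\<lambda>n. \<forall>a b. real (N n) * \<bar>Hemp x y n a b - H a b\<bar> \<le> \<epsilon> \<and>
        real (N n) * \<bar>emp_df x n a - F a\<bar> \<le> \<epsilon> \<and> real (N n) * \<bar>emp_df y n b - G b\<bar> \<le> \<epsilon>) sequentially"
  shows "(\<lambda>n. SUP p\<in>UNIV. \<bar>cb_kernel (N n) (emp_copula x y n) (emp_df x n (fst p)) (emp_df y n (snd p))
      - measure (KA (F (fst p))) {0..G (snd p)}\<bar>) \<longlonglongrightarrow> 0"
  unfolding tendsto_iff
proof (intro allI impI)
  fix \<epsilon> :: real assume ep: "\<epsilon> > 0"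
  obtain \<delta>0 where d0p: "\<delta>0 > 0" and d0: "\<forall>t w t' w'. t \<in> {0..1} \<longrightarrow> w \<in> {0..1} \<longrightarrow> t' \<in> {0..1} \<longrightarrow> w' \<in> {0..1} \<longrightarrow>
     \<bar>t - t'\<bar> < \<delta>0 \<longrightarrow> \<bar>w - w'\<bar> < \<delta>0 \<longrightarrow> \<bar>measure (KA t) {0..w} - measure (KA t') {0..w'}\<bar> < \<epsilon> / 4"
    using kernel_unif_cont[OF K, of "\<epsilon> / 4"] ep by auto
  define \<epsilon>1 where "\<epsilon>1 = \<epsilon> / 48"
  have e1: "\<epsilon>1 > 0" using ep unfolding \<epsilon>1_def by simp
  define M where "M = nat \<lceil>(1 + \<epsilon>1) / \<delta>0\<rceil> + 1"
  have ev1: "eventually (\<lambda>n. M \<le> N n) sequentially" using Ninf by (simp add: filterlim_at_top)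
  have ev2: "eventually (\<lambda>n. dist (real (N n) / real n) 0 < \<epsilon> / 32) sequentially"
  proof -
    have "\<epsilon> / 32 > 0" using ep by simp
    then show ?thesis using Nn unfolding tendsto_iff by blast
  qed
  have ev3: "eventually (\<lambda>n. n \<ge> 1) sequentially" by (rule eventually_ge_at_top)
  have "eventually (\<lambda>n. dist (SUP p\<in>UNIV. \<bar>cb_kernel (N n) (emp_copula x y n) (emp_df x n (fst p)) (emp_df y n (snd p))
      - measure (KA (F (fst p))) {0..G (snd p)}\<bar>) 0 < \<epsilon>) sequentially"
    using ev1 ev2 ev3 rate[OF e1]
  proof eventually_elim
    case (elim n)
    have Mpos: "real M > (1 + \<epsilon>1) / \<delta>0" unfolding M_def by linarith
    have N1: "N n \<ge> 1" using elim(1) unfolding M_def by simp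
    have Np: "real (N n) > 0" using N1 by simp
    have NM: "real (N n) > (1 + \<epsilon>1) / \<delta>0" using elim(1) Mpos by linarith
    have small: "1 / real (N n) + \<epsilon>1 / real (N n) < \<delta>0"
    proof -
      have "(1 + \<epsilon>1) < \<delta>0 * real (N n)" using NM d0p by (simp add: field_simps)
      then show ?thesis using Np by (simp add: field_simps add_divide_distrib[symmetric])
    qed
    have dv: "\<bar>z\<bar> \<le> \<epsilon>1 / real (N n)" if "real (N n) * \<bar>z\<bar> \<le> \<epsilon>1" for z
      using that Np by (simp add: field_simps)
    have n1: "n \<ge> 1" using elim(3) .
    have Nr: "real (N n) / real n < \<epsilon> / 32" using elim(2) Np by (simp add: dist_real_def)
    define f where "f p = \<bar>cb_kernel (N n) (emp_copula x y n) (emp_df x n (fst p)) (emp_df y n (snd p))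
      - measure (KA (F (fst p))) {0..G (snd p)}\<bar>" for p :: "real \<times> real"
    have fb: "f p \<le> \<epsilon> / 2" for p
    proof -
      have "f p \<le> 2 * real (N n) * (3 * (\<epsilon>1 / real (N n)) + 2 / real n) + \<epsilon> / 4"
        unfolding f_def
      proof (rule bound_at_n[OF A K _ _ HA F01 G01 _ _ _ n1 N1 _ small])
        show "inj_on x {..<n}" "inj_on y {..<n}" using injx injy by (auto intro: inj_on_subset)
        show "\<bar>Hemp x y n a b - H a b\<bar> \<le> \<epsilon>1 / real (N n)" for a b using elim(4) dv by blast
        show "\<bar>emp_df x n a - F a\<bar> \<le> \<epsilon>1 / real (N n)" for a using elim(4) dv by blast
        show "\<bar>emp_df y n b - G b\<bar> \<le> \<epsilon>1 / real (N n)" for b using elim(4) dv by blast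
        show "\<bar>measure (KA t) {0..w} - measure (KA t') {0..w'}\<bar> < \<epsilon> / 4"
          if "t \<in> {0..1}" "w \<in> {0..1}" "t' \<in> {0..1}" "w' \<in> {0..1}" "\<bar>t - t'\<bar> < \<delta>0" "\<bar>w - w'\<bar> < \<delta>0" for t w t' w'
          using d0 that by blast
      qed
      also have "\<dots> = 6 * \<epsilon>1 + 4 * (real (N n) / real n) + \<epsilon> / 4"
        using Np by (simp add: field_simps)
      also have "\<dots> \<le> \<epsilon> / 2"
      proof -
        have "4 * (real (N n) / real n) \<le> \<epsilon> / 8" using Nr by linarith
        then show ?thesis unfolding \<epsilon>1_def by linarith
      qed
      finally show ?thesis .
    qed
    have f0: "0 \<le> f p" for p unfolding f_def by simp
    have "(SUP p\<in>UNIV. f p) \<le> \<epsilon> / 2" by (rule cSUP_least) (use fb in auto)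
    moreover have "f (0, 0) \<le> (SUP p\<in>UNIV. f p)" by (rule cSUP_upper) (use fb in \<open>auto intro!: bdd_aboveI2[where M="\<epsilon> / 2"]\<close>)
    ultimately have "\<bar>SUP p\<in>UNIV. f p\<bar> < \<epsilon>" using f0[of "(0,0)"] ep by auto
    then show ?case unfolding f_def dist_real_def by simp
  qed
  then show "eventually (\<lambda>n. dist (SUP p\<in>UNIV. \<bar>cb_kernel (N n) (emp_copula x y n) (emp_df x n (fst p)) (emp_df y n (snd p))
      - measure (KA (F (fst p))) {0..G (snd p)}\<bar>) 0 < \<epsilon>) sequentially" .
qed


locale cop_setup = prob_space M for M :: "'a measure" +
  fixes X Y :: "nat \<Rightarrow> 'a \<Rightarrow> real" and H :: "real \<Rightarrow> real \<Rightarrow> real" and F G :: "real \<Rightarrow> real"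
    and A :: "real \<Rightarrow> real \<Rightarrow> real"
  assumes Xm[measurable]: "\<And>i. X i \<in> borel_measurable M" and Ym[measurable]: "\<And>i. Y i \<in> borel_measurable M"
    and indep: "indep_vars (\<lambda>_. borel) (\<lambda>i \<omega>. (X i \<omega>, Y i \<omega>)) UNIV"
    and ident: "\<And>i. distr M borel (\<lambda>\<omega>. (X i \<omega>, Y i \<omega>)) = distr M borel (\<lambda>\<omega>. (X 0 \<omega>, Y 0 \<omega>))"
    and Hdef: "\<And>x y. H x y = measure M {\<omega> \<in> space M. X 0 \<omega> \<le> x \<and> Y 0 \<omega> \<le> y}"
    and Fdef: "\<And>x. F x = measure M {\<omega> \<in> space M. X 0 \<omega> \<le> x}"
    and Gdef: "\<And>y. G y = measure M {\<omega> \<in> space M. Y 0 \<omega> \<le> y}"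
    and Hcont: "continuous_on UNIV (\<lambda>(x, y). H x y)"
    and Acop: "is_copula A" and HA: "\<And>x y. H x y = A (F x) (G y)"
begin

definition Z :: "nat \<Rightarrow> 'a \<Rightarrow> real \<times> real" where "Z i \<omega> = (X i \<omega>, Y i \<omega>)"

lemma Zm[measurable]: "Z i \<in> borel_measurable M"
  unfolding Z_def by measurable

definition P :: "(real \<times> real) set \<Rightarrow> real" where
  "P D = prob {\<omega> \<in> space M. Z 0 \<omega> \<in> D}"

definition cnt :: "'a \<Rightarrow> nat \<Rightarrow> (real \<times> real) set \<Rightarrow> real" where
  "cnt \<omega> n D = (\<Sum>k<n. indicator D (Z k \<omega>)) / real n"

lemma P_ident:
  assumes "D \<in> sets borel"
  shows "prob {\<omega> \<in> space M. Z i \<omega> \<in> D} = P D"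
proof -
  have "prob {\<omega> \<in> space M. Z i \<omega> \<in> D} = measure (distr M borel (Z i)) D"
    using assms by (subst measure_distr) (auto simp: vimage_def Int_def conj_commute)
  also have "distr M borel (Z i) = distr M borel (Z 0)" using ident[of i] unfolding Z_def by simp
  also have "measure (distr M borel (Z 0)) D = P D"
    using assms unfolding P_def by (subst measure_distr) (auto simp: vimage_def Int_def conj_commute)
  finally show ?thesis .
qed

lemma hoeffding_D:
  assumes D: "D \<in> sets borel" and n: "n \<ge> 1" and eta: "\<eta> \<ge> 0"
  shows "prob {\<omega> \<in> space M. \<bar>cnt \<omega> n D - P D\<bar> \<ge> \<eta>} \<le> 2 * exp (- 2 * real n * \<eta>\<^sup>2)"
proof -
  define W where "W k \<omega> = (indicator D (Z k \<omega>) :: real)" for k \<omega>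
  have Wi: "W i = (\<lambda>\<omega>. indicator D (Z i \<omega>))" for i by (simp add: fun_eq_iff W_def)
  have Wm[measurable]: "W k \<in> borel_measurable M" for k unfolding W_def using D by measurable
  interpret H: Hoeffding_ineq_iid M "{..<n}" W "W 0" 0 1 "expectation (W 0)"
  proof unfold_locales
    show "finite {..<n}" by simp
    have "indep_vars (\<lambda>_. borel) (\<lambda>k \<omega>. indicator D (Z k \<omega>) :: real) UNIV"
      using indep_vars_compose2[OF indep, of "\<lambda>_ p. indicator D p :: real" "\<lambda>_. borel"] D unfolding Z_def
      by auto
    then show "indep_vars (\<lambda>_. borel) W {..<n}" unfolding W_def by (rule indep_vars_subset) auto
    fix i
    have "distr M borel (W i) = distr (distr M borel (Z i)) borel (indicator D)"
      using D by (subst distr_distr) (auto simp: Wi o_def)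
    also have "distr M borel (Z i) = distr M borel (Z 0)" using ident[of i] unfolding Z_def by simp
    also have "distr (distr M borel (Z 0)) borel (indicator D) = distr M borel (W 0)"
      using D by (subst distr_distr) (auto simp: Wi o_def)
    finally show "distr M borel (W i) = distr M borel (W 0)" .
  next
    show "random_variable borel (W 0)" by measurable
    show "AE x in M. W 0 x \<in> {0..1}" by (auto simp: W_def indicator_def)
  qed
  have ex: "expectation (W 0) = P D"
  proof -
    have "expectation (W 0) = expectation (indicator {\<omega> \<in> space M. Z 0 \<omega> \<in> D})"
      by (rule Bochner_Integration.integral_cong) (auto simp: W_def indicator_def)
    also have "\<dots> = P D" unfolding P_def
      by (subst Bochner_Integration.integral_indicator) (simp add: Int_absorb2 subset_eq)
    finally show ?thesis .
  qed
  have "prob {x\<in>space M. \<bar>(\<Sum>i\<in>{..<n}. W i x) / real (card {..<n}) - expectation (W 0)\<bar> \<ge> \<eta>} \<le>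
        2 * exp (-2 * real (card {..<n}) * \<eta>\<^sup>2 / (1 - 0)\<^sup>2)"
    by (rule H.Hoeffding_ineq_abs_ge'[OF eta]) (use n in \<open>auto simp: lessThan_empty_iff\<close>)
  then show ?thesis unfolding ex cnt_def W_def by simp
qed

end

context cop_setup begin

lemma F_cdf: "F = cdf (distr M borel (X 0))"
proof
  fix a
  show "F a = cdf (distr M borel (X 0)) a"
    unfolding cdf_def2 Fdef by (subst measure_distr) (auto simp: vimage_def Int_def conj_commute)
qed

lemma G_cdf: "G = cdf (distr M borel (Y 0))"
proof
  fix a
  show "G a = cdf (distr M borel (Y 0)) a"
    unfolding cdf_def2 Gdef by (subst measure_distr) (auto simp: vimage_def Int_def conj_commute)
qed

lemma F_lim_top: "(F \<longlongrightarrow> 1) at_top"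
  unfolding F_cdf by (rule real_distribution.cdf_lim_at_top_prob) simp
lemma F_lim_bot: "(F \<longlongrightarrow> 0) at_bot"
  unfolding F_cdf by (rule finite_borel_measure.cdf_lim_at_bot[OF real_distribution.finite_borel_measure_M]) simp
lemma G_lim_top: "(G \<longlongrightarrow> 1) at_top"
  unfolding G_cdf by (rule real_distribution.cdf_lim_at_top_prob) simp
lemma G_lim_bot: "(G \<longlongrightarrow> 0) at_bot"
  unfolding G_cdf by (rule finite_borel_measure.cdf_lim_at_bot[OF real_distribution.finite_borel_measure_M]) simp

lemma F_mono: "a \<le> b \<Longrightarrow> F a \<le> F b"
  unfolding F_cdf by (rule finite_borel_measure.cdf_nondecreasing[OF real_distribution.finite_borel_measure_M]) simp_all
lemma G_mono: "a \<le> b \<Longrightarrow> G a \<le> G b"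
  unfolding G_cdf by (rule finite_borel_measure.cdf_nondecreasing[OF real_distribution.finite_borel_measure_M]) simp_all

lemma F01: "F a \<in> {0..1}"
  unfolding Fdef by auto
lemma G01: "G a \<in> {0..1}"
  unfolding Gdef by auto

lemma H_cont2: "continuous_on UNIV (\<lambda>a. H a b)"
proof -
  have "continuous_on UNIV ((\<lambda>(x, y). H x y) \<circ> (\<lambda>a. (a, b)))"
    by (rule continuous_on_compose[OF _ continuous_on_subset[OF Hcont]]) (auto intro!: continuous_intros)
  then show ?thesis by (simp add: o_def)
qed

lemma H_cont1: "continuous_on UNIV (\<lambda>b. H a b)"
proof -
  have "continuous_on UNIV ((\<lambda>(x, y). H x y) \<circ> (\<lambda>b. (a, b)))"
    by (rule continuous_on_compose[OF _ continuous_on_subset[OF Hcont]]) (auto intro!: continuous_intros)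
  then show ?thesis by (simp add: o_def)
qed

lemma F_cont: "continuous_on UNIV F"
proof (rule uniform_limit_theorem)
  show "\<forall>\<^sub>F k in sequentially. continuous_on UNIV (\<lambda>a. H a (real k))" using H_cont2 by simp
  show "uniform_limit UNIV (\<lambda>k a. H a (real k)) F sequentially"
  proof (rule uniform_limitI)
    fix e :: real assume e: "e > 0"
    have "((\<lambda>k. G (real k)) \<longlongrightarrow> 1) sequentially"
      by (rule filterlim_compose[OF G_lim_top filterlim_real_sequentially])
    then have "\<forall>\<^sub>F k in sequentially. dist (G (real k)) 1 < e" using e by (simp add: tendsto_iff)
    then show "\<forall>\<^sub>F k in sequentially. \<forall>x\<in>UNIV. dist (H x (real k)) (F x) < e"
    proof (rule eventually_mono)
      fix k assume k: "dist (G (real k)) 1 < e"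
      show "\<forall>x\<in>UNIV. dist (H x (real k)) (F x) < e"
      proof
        fix x
        have "\<bar>A (F x) (G (real k)) - A (F x) 1\<bar> \<le> \<bar>F x - F x\<bar> + \<bar>G (real k) - 1\<bar>"
          by (rule copula_lip[OF Acop F01 F01 G01]) simp
        moreover have "A (F x) 1 = F x" using copula_ground(3)[OF Acop F01] .
        ultimately show "dist (H x (real k)) (F x) < e" using k unfolding HA dist_real_def by simp
      qed
    qed
  qed
qed simp

lemma G_cont: "continuous_on UNIV G"
proof (rule uniform_limit_theorem)
  show "\<forall>\<^sub>F k in sequentially. continuous_on UNIV (\<lambda>b. H (real k) b)" using H_cont1 by simp
  show "uniform_limit UNIV (\<lambda>k b. H (real k) b) G sequentially"
  proof (rule uniform_limitI)
    fix e :: real assume e: "e > 0"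
    have "((\<lambda>k. F (real k)) \<longlongrightarrow> 1) sequentially"
      by (rule filterlim_compose[OF F_lim_top filterlim_real_sequentially])
    then have "\<forall>\<^sub>F k in sequentially. dist (F (real k)) 1 < e" using e by (simp add: tendsto_iff)
    then show "\<forall>\<^sub>F k in sequentially. \<forall>x\<in>UNIV. dist (H (real k) x) (G x) < e"
    proof (rule eventually_mono)
      fix k assume k: "dist (F (real k)) 1 < e"
      show "\<forall>x\<in>UNIV. dist (H (real k) x) (G x) < e"
      proof
        fix x
        have "\<bar>A (F (real k)) (G x) - A 1 (G x)\<bar> \<le> \<bar>F (real k) - 1\<bar> + \<bar>G x - G x\<bar>"
          by (rule copula_lip[OF Acop F01 _ G01 G01]) simp
        moreover have "A 1 (G x) = G x" using copula_ground(4)[OF Acop G01] .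
        ultimately show "dist (H (real k) x) (G x) < e" using k unfolding HA dist_real_def by simp
      qed
    qed
  qed
qed simp

end

lemma quantile:
  fixes F :: "real \<Rightarrow> real"
  assumes mono: "\<And>a b. a \<le> b \<Longrightarrow> F a \<le> F b" and cont: "continuous_on UNIV F"
    and bot: "(F \<longlongrightarrow> 0) at_bot" and top: "(F \<longlongrightarrow> 1) at_top" and c: "0 < c" "c < 1"
  shows "\<exists>\<alpha>. F \<alpha> = c \<and> (\<forall>t. F t \<le> c \<longrightarrow> t \<le> \<alpha>)"
proof -
  have "eventually (\<lambda>x. F x < c) at_bot" using bot c by (simp add: order_tendstoD)
  then obtain p where p: "F p < c" by (auto simp: eventually_at_bot_linorder)
  have "eventually (\<lambda>x. F x > c) at_top" using top c by (simp add: order_tendstoD)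
  then obtain q where q: "F q > c" by (auto simp: eventually_at_top_linorder)
  have pq: "p \<le> q" using mono[of q p] p q by (cases "p \<le> q") auto
  obtain t0 where t0: "F t0 = c" using IVT'[of F p c q] p q pq continuous_on_subset[OF cont] by force
  define S where "S = {t. F t \<le> c}"
  have cl: "closed S" unfolding S_def by (rule closed_Collect_le[OF cont continuous_on_const])
  have bdd: "bdd_above S" unfolding S_def
  proof (rule bdd_aboveI[of _ q])
    fix t assume "t \<in> {t. F t \<le> c}"
    then show "t \<le> q" using mono[of q t] q by (cases "t \<le> q") auto
  qed
  have ne: "S \<noteq> {}" "t0 \<in> S" using t0 unfolding S_def by auto
  have "Sup S \<in> S" by (rule closed_contains_Sup[OF ne(1) bdd cl])
  then have "F (Sup S) \<le> c" unfolding S_def by simp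
  moreover have "t0 \<le> Sup S" by (rule cSup_upper[OF ne(2) bdd])
  then have "c \<le> F (Sup S)" using mono t0 by metis
  moreover have "\<forall>t. F t \<le> c \<longrightarrow> t \<le> Sup S" using cSup_upper[OF _ bdd] unfolding S_def by auto
  ultimately show ?thesis by (intro exI[of _ "Sup S"]) auto
qed

lemma grid:
  fixes F :: "real \<Rightarrow> real"
  assumes mono: "\<And>a b. a \<le> b \<Longrightarrow> F a \<le> F b" and cont: "continuous_on UNIV F"
    and bot: "(F \<longlongrightarrow> 0) at_bot" and top: "(F \<longlongrightarrow> 1) at_top" and m: "m \<ge> 1"
    and F01: "\<And>a. F a \<in> {0..1}"
  shows "\<exists>S :: nat \<Rightarrow> real set. S 0 = {} \<and> S m = UNIV \<and>
    (\<forall>r. r \<in> {1..<m} \<longrightarrow> (\<exists>\<alpha>. S r = {..\<alpha>} \<and> F \<alpha> = real r / real m)) \<and>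
    (\<forall>r<m. S r \<subseteq> S (Suc r)) \<and> (\<forall>a. \<exists>r<m. S r \<subseteq> {..a} \<and> {..a} \<subseteq> S (Suc r))"
proof -
  have mp: "real m > 0" using m by simp
  have "\<forall>r. \<exists>\<alpha>. r \<in> {1..<m} \<longrightarrow> F \<alpha> = real r / real m \<and> (\<forall>t. F t \<le> real r / real m \<longrightarrow> t \<le> \<alpha>)"
  proof
    fix r
    show "\<exists>\<alpha>. r \<in> {1..<m} \<longrightarrow> F \<alpha> = real r / real m \<and> (\<forall>t. F t \<le> real r / real m \<longrightarrow> t \<le> \<alpha>)"
    proof (cases "r \<in> {1..<m}")
      case True
      then have "0 < real r / real m" "real r / real m < 1" using mp by auto
      then show ?thesis using quantile[OF mono cont bot top] by blast
    qed auto
  qed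
  then obtain \<alpha> where \<alpha>: "\<And>r. r \<in> {1..<m} \<Longrightarrow> F (\<alpha> r) = real r / real m \<and> (\<forall>t. F t \<le> real r / real m \<longrightarrow> t \<le> \<alpha> r)"
    by metis
  define S where "S r = (if r = 0 then {} else if r \<ge> m then UNIV else {..\<alpha> r})" for r
  have nest: "\<forall>r<m. S r \<subseteq> S (Suc r)"
  proof (intro allI impI)
    fix r assume r: "r < m"
    show "S r \<subseteq> S (Suc r)"
    proof (cases "r = 0 \<or> Suc r \<ge> m")
      case True then show ?thesis unfolding S_def by auto
    next
      case False
      then have r1: "r \<in> {1..<m}" "Suc r \<in> {1..<m}" using r by auto
      have "F (\<alpha> r) \<le> real (Suc r) / real m" using \<alpha>[OF r1(1)] mp by (simp add: divide_right_mono)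
      then have "\<alpha> r \<le> \<alpha> (Suc r)" using \<alpha>[OF r1(2)] by blast
      then show ?thesis unfolding S_def using False by auto
    qed
  qed
  have cover: "\<forall>a. \<exists>r<m. S r \<subseteq> {..a} \<and> {..a} \<subseteq> S (Suc r)"
  proof
    fix a
    define c where "c = \<lceil>real m * F a\<rceil>"
    have c1: "real_of_int c - 1 < real m * F a" "real m * F a \<le> real_of_int c" unfolding c_def by linarith+
    have fa: "0 \<le> F a" "F a \<le> 1" using F01[of a] by auto
    have nu: "0 \<le> real m * F a" "real m * F a \<le> real m" using fa mp by (auto simp: mult_le_cancel_left1)
    have c0: "0 \<le> c" "c \<le> int m" unfolding c_def using nu by (auto intro!: ceiling_le)
    define r where "r = nat c - 1"
    have rm: "r < m" unfolding r_def using c0 m by linarith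
    have low: "S r \<subseteq> {..a}"
    proof (cases "r = 0")
      case True then show ?thesis unfolding S_def by simp
    next
      case False
      then have r1: "r \<in> {1..<m}" using rm by auto
      have nc: "nat c \<ge> 1" using False unfolding r_def by simp
      have "real r = real (nat c) - 1" unfolding r_def using nc by (simp add: of_nat_diff)
      then have rr: "real r = real_of_int c - 1" using c0 by simp
      have "real r / real m < F a" using c1 rr mp by (simp add: field_simps)
      then have "\<alpha> r \<le> a" using \<alpha>[OF r1] mono[of a "\<alpha> r"] by (cases "\<alpha> r \<le> a") auto
      then show ?thesis unfolding S_def using r1 by auto
    qed
    have up: "{..a} \<subseteq> S (Suc r)"
    proof (cases "Suc r \<ge> m")
      case True then show ?thesis unfolding S_def by simp
    next
      case False
      then have r1: "Suc r \<in> {1..<m}" by auto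
      have "real m * F a \<le> real (Suc r)" unfolding r_def using c1 c0 fa mp
        by (cases "c = 0") (auto simp: of_nat_diff)
      then have "F a \<le> real (Suc r) / real m" using mp by (simp add: field_simps)
      then have "a \<le> \<alpha> (Suc r)" using \<alpha>[OF r1] by blast
      then show ?thesis unfolding S_def using False by auto
    qed
    show "\<exists>r<m. S r \<subseteq> {..a} \<and> {..a} \<subseteq> S (Suc r)" using rm low up by blast
  qed
  have q: "\<forall>r. r \<in> {1..<m} \<longrightarrow> (\<exists>\<alpha>'. S r = {..\<alpha>'} \<and> F \<alpha>' = real r / real m)"
    unfolding S_def using \<alpha> by auto
  show ?thesis
    by (rule exI[of _ S]) (use nest cover q m in \<open>auto simp: S_def\<close>)
qed


lemma times_borel: "S \<in> sets borel \<Longrightarrow> T \<in> sets borel \<Longrightarrow> (S \<times> T :: (real \<times> real) set) \<in> sets borel"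
  by (simp add: borel_prod[symmetric])

context cop_setup begin

lemma Pset: "D \<in> sets borel \<Longrightarrow> {\<omega> \<in> space M. Z i \<omega> \<in> D} \<in> sets M"
proof -
  assume "D \<in> sets borel"
  moreover have "{\<omega> \<in> space M. Z i \<omega> \<in> D} = Z i -` D \<inter> space M" by auto
  ultimately show ?thesis using measurable_sets[OF Zm] by simp
qed

lemma P_mono: "D \<subseteq> D' \<Longrightarrow> D' \<in> sets borel \<Longrightarrow> P D \<le> P D'"
  unfolding P_def by (rule finite_measure_mono) (auto intro: Pset)

lemma P_un3:
  assumes "D1 \<in> sets borel" "D2 \<in> sets borel" "D3 \<in> sets borel"
  shows "P (D1 \<union> D2 \<union> D3) \<le> P D1 + P D2 + P D3"
proof -
  have e: "{\<omega> \<in> space M. Z 0 \<omega> \<in> D1 \<union> D2 \<union> D3} = {\<omega> \<in> space M. Z 0 \<omega> \<in> D1} \<union> {\<omega> \<in> space M. Z 0 \<omega> \<in> D2} \<union> {\<omega> \<in> space M. Z 0 \<omega> \<in> D3}"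
    by auto
  show ?thesis unfolding P_def e using assms
    by (intro order.trans[OF measure_Un_le] add_mono measure_Un_le order_refl) (auto intro!: Pset sets.Un)
qed

lemma P_diff:
  assumes "S \<subseteq> S'" "S \<in> sets borel" "S' \<in> sets borel"
  shows "P ((S' - S) \<times> UNIV) = P (S' \<times> UNIV) - P (S \<times> UNIV)"
proof -
  have e: "{\<omega> \<in> space M. Z 0 \<omega> \<in> (S' - S) \<times> UNIV} = {\<omega> \<in> space M. Z 0 \<omega> \<in> S' \<times> UNIV} - {\<omega> \<in> space M. Z 0 \<omega> \<in> S \<times> UNIV}"
    by auto
  show ?thesis unfolding P_def e using assms
    by (subst finite_measure_Diff) (auto intro!: times_borel Pset)
qed

lemma P_diff2:
  assumes "T \<subseteq> T'" "T \<in> sets borel" "T' \<in> sets borel"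
  shows "P (UNIV \<times> (T' - T)) = P (UNIV \<times> T') - P (UNIV \<times> T)"
proof -
  have e: "{\<omega> \<in> space M. Z 0 \<omega> \<in> UNIV \<times> (T' - T)} = {\<omega> \<in> space M. Z 0 \<omega> \<in> UNIV \<times> T'} - {\<omega> \<in> space M. Z 0 \<omega> \<in> UNIV \<times> T}"
    by auto
  show ?thesis unfolding P_def e using assms
    by (subst finite_measure_Diff) (auto intro!: times_borel Pset)
qed

lemma cnt_mono: "D \<subseteq> D' \<Longrightarrow> cnt \<omega> n D \<le> cnt \<omega> n D'"
  unfolding cnt_def by (intro divide_right_mono sum_mono) (auto simp: indicator_def)

lemma sandwich:
  assumes b: "S \<in> sets borel" "S' \<in> sets borel" "T \<in> sets borel" "T' \<in> sets borel" "U \<in> sets borel" "V \<in> sets borel"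
    and inc: "S \<subseteq> U" "U \<subseteq> S'" "T \<subseteq> V" "V \<subseteq> T'"
    and dS: "P ((S' - S) \<times> UNIV) \<le> e" and dT: "P (UNIV \<times> (T' - T)) \<le> e"
    and c1: "\<bar>cnt \<omega> n (S \<times> T) - P (S \<times> T)\<bar> \<le> \<eta>" and c2: "\<bar>cnt \<omega> n (S' \<times> T') - P (S' \<times> T')\<bar> \<le> \<eta>"
  shows "\<bar>cnt \<omega> n (U \<times> V) - P (U \<times> V)\<bar> \<le> \<eta> + 2 * e"
proof -
  have "S' \<times> T' \<subseteq> S \<times> T \<union> (S' - S) \<times> UNIV \<union> UNIV \<times> (T' - T)" by auto
  then have "P (S' \<times> T') \<le> P (S \<times> T \<union> (S' - S) \<times> UNIV \<union> UNIV \<times> (T' - T))"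
    using b by (intro P_mono) (auto intro!: times_borel sets.Un sets.Diff)
  also have "\<dots> \<le> P (S \<times> T) + P ((S' - S) \<times> UNIV) + P (UNIV \<times> (T' - T))"
    using b by (intro P_un3) (auto intro!: times_borel)
  finally have d: "P (S' \<times> T') \<le> P (S \<times> T) + 2 * e" using dS dT by simp
  have m1: "cnt \<omega> n (S \<times> T) \<le> cnt \<omega> n (U \<times> V)" "cnt \<omega> n (U \<times> V) \<le> cnt \<omega> n (S' \<times> T')"
    using inc by (auto intro!: cnt_mono)
  have m2: "P (S \<times> T) \<le> P (U \<times> V)" "P (U \<times> V) \<le> P (S' \<times> T')"
    using inc b by (auto intro!: P_mono times_borel)
  show ?thesis using d m1 m2 c1 c2 by (simp add: abs_le_iff)
qed

end

definition gp :: "(real \<Rightarrow> real) \<Rightarrow> nat \<Rightarrow> (nat \<Rightarrow> real set) \<Rightarrow> bool" where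
  "gp F m S \<longleftrightarrow> S 0 = {} \<and> S m = UNIV \<and>
    (\<forall>r. r \<in> {1..<m} \<longrightarrow> (\<exists>\<alpha>. S r = {..\<alpha>} \<and> F \<alpha> = real r / real m)) \<and>
    (\<forall>r<m. S r \<subseteq> S (Suc r)) \<and> (\<forall>a. \<exists>r<m. S r \<subseteq> {..a} \<and> {..a} \<subseteq> S (Suc r))"

lemma gp_borel: "gp F m S \<Longrightarrow> r \<le> m \<Longrightarrow> S r \<in> sets borel"
proof -
  assume g: "gp F m S" and r: "r \<le> m"
  show ?thesis
  proof (cases "r = 0 \<or> r = m")
    case True then show ?thesis using g unfolding gp_def by auto
  next
    case False
    then have "r \<in> {1..<m}" using r by auto
    then obtain \<alpha> where "S r = {..\<alpha>}" using g unfolding gp_def by blast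
    then show ?thesis by simp
  qed
qed

lemma gp_univ: "gp F m S \<Longrightarrow> m \<ge> 1 \<Longrightarrow> \<exists>r<m. S r \<subseteq> UNIV \<and> UNIV \<subseteq> S (Suc r)"
  unfolding gp_def by (intro exI[of _ "m - 1"]) auto

context cop_setup begin

definition SF :: "nat \<Rightarrow> nat \<Rightarrow> real set" where "SF m = (SOME S. gp F m S)"
definition SG :: "nat \<Rightarrow> nat \<Rightarrow> real set" where "SG m = (SOME S. gp G m S)"

lemma gpF: "m \<ge> 1 \<Longrightarrow> gp F m (SF m)"
proof -
  assume m: "m \<ge> 1"
  have "\<exists>S. gp F m S" unfolding gp_def using grid[OF F_mono F_cont F_lim_bot F_lim_top m F01] by blast
  then show ?thesis unfolding SF_def by (rule someI_ex)
qed
lemma gpG: "m \<ge> 1 \<Longrightarrow> gp G m (SG m)"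
proof -
  assume m: "m \<ge> 1"
  have "\<exists>S. gp G m S" unfolding gp_def using grid[OF G_mono G_cont G_lim_bot G_lim_top m G01] by blast
  then show ?thesis unfolding SG_def by (rule someI_ex)
qed

lemma F_P: "F a = P ({..a} \<times> UNIV)"
  unfolding Fdef P_def Z_def by (auto intro!: arg_cong[where f=prob])
lemma G_P: "G b = P (UNIV \<times> {..b})"
  unfolding Gdef P_def Z_def by (auto intro!: arg_cong[where f=prob])
lemma H_P: "H a b = P ({..a} \<times> {..b})"
  unfolding Hdef P_def Z_def by (auto intro!: arg_cong[where f=prob])

lemma P_empty: "P {} = 0" unfolding P_def by simp
lemma P_UNIV: "P UNIV = 1" unfolding P_def by (simp add: prob_space)

lemma gp_massF: "gp F m S \<Longrightarrow> m \<ge> 1 \<Longrightarrow> r \<le> m \<Longrightarrow> P (S r \<times> UNIV) = real r / real m"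
proof -
  assume g: "gp F m S" and m: "m \<ge> 1" and r: "r \<le> m"
  show ?thesis
  proof (cases "r = 0 \<or> r = m")
    case True then show ?thesis using g m unfolding gp_def by (auto simp: P_empty P_UNIV)
  next
    case False
    then have "r \<in> {1..<m}" using r by auto
    then obtain \<alpha> where "S r = {..\<alpha>}" "F \<alpha> = real r / real m" using g unfolding gp_def by blast
    then show ?thesis using F_P by simp
  qed
qed

lemma gp_massG: "gp G m S \<Longrightarrow> m \<ge> 1 \<Longrightarrow> r \<le> m \<Longrightarrow> P (UNIV \<times> S r) = real r / real m"
proof -
  assume g: "gp G m S" and m: "m \<ge> 1" and r: "r \<le> m"
  show ?thesis
  proof (cases "r = 0 \<or> r = m")
    case True then show ?thesis using g m unfolding gp_def by (auto simp: P_empty P_UNIV)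
  next
    case False
    then have "r \<in> {1..<m}" using r by auto
    then obtain \<alpha> where "S r = {..\<alpha>}" "G \<alpha> = real r / real m" using g unfolding gp_def by blast
    then show ?thesis using G_P by simp
  qed
qed

lemma gp_cellF: "gp F m S \<Longrightarrow> m \<ge> 1 \<Longrightarrow> r < m \<Longrightarrow> P ((S (Suc r) - S r) \<times> UNIV) = 1 / real m"
proof -
  assume g: "gp F m S" and m: "m \<ge> 1" and r: "r < m"
  have "P ((S (Suc r) - S r) \<times> UNIV) = P (S (Suc r) \<times> UNIV) - P (S r \<times> UNIV)"
    using g r by (intro P_diff) (auto simp: gp_def intro: gp_borel)
  also have "\<dots> = 1 / real m" using gp_massF[OF g m, of r] gp_massF[OF g m, of "Suc r"] r by (simp add: diff_divide_distrib[symmetric])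
  finally show ?thesis .
qed

lemma gp_cellG: "gp G m S \<Longrightarrow> m \<ge> 1 \<Longrightarrow> r < m \<Longrightarrow> P (UNIV \<times> (S (Suc r) - S r)) = 1 / real m"
proof -
  assume g: "gp G m S" and m: "m \<ge> 1" and r: "r < m"
  have "P (UNIV \<times> (S (Suc r) - S r)) = P (UNIV \<times> S (Suc r)) - P (UNIV \<times> S r)"
    using g r by (intro P_diff2) (auto simp: gp_def intro: gp_borel)
  also have "\<dots> = 1 / real m" using gp_massG[OF g m, of r] gp_massG[OF g m, of "Suc r"] r by (simp add: diff_divide_distrib[symmetric])
  finally show ?thesis .
qed

lemma unif_bound:
  assumes m: "m \<ge> 1" and gF: "gp F m S" and gG: "gp G m T"
    and grid: "\<And>r q. r \<le> m \<Longrightarrow> q \<le> m \<Longrightarrow> \<bar>cnt \<omega> n (S r \<times> T q) - P (S r \<times> T q)\<bar> \<le> \<eta>"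
    and U: "U \<in> sets borel" "\<exists>r<m. S r \<subseteq> U \<and> U \<subseteq> S (Suc r)"
    and V: "V \<in> sets borel" "\<exists>q<m. T q \<subseteq> V \<and> V \<subseteq> T (Suc q)"
  shows "\<bar>cnt \<omega> n (U \<times> V) - P (U \<times> V)\<bar> \<le> \<eta> + 2 * (1 / real m)"
proof -
  obtain r where r: "r < m" "S r \<subseteq> U" "U \<subseteq> S (Suc r)" using U by blast
  obtain q where q: "q < m" "T q \<subseteq> V" "V \<subseteq> T (Suc q)" using V by blast
  show ?thesis
  proof (rule sandwich[OF _ _ _ _ U(1) V(1) r(2,3) q(2,3)])
    show "S r \<in> sets borel" "S (Suc r) \<in> sets borel" using gp_borel[OF gF] r by auto
    show "T q \<in> sets borel" "T (Suc q) \<in> sets borel" using gp_borel[OF gG] q by auto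
    show "P ((S (Suc r) - S r) \<times> UNIV) \<le> 1 / real m" using gp_cellF[OF gF m r(1)] by simp
    show "P (UNIV \<times> (T (Suc q) - T q)) \<le> 1 / real m" using gp_cellG[OF gG m q(1)] by simp
    show "\<bar>cnt \<omega> n (S r \<times> T q) - P (S r \<times> T q)\<bar> \<le> \<eta>" using grid r q by auto
    show "\<bar>cnt \<omega> n (S (Suc r) \<times> T (Suc q)) - P (S (Suc r) \<times> T (Suc q))\<bar> \<le> \<eta>" using grid r q by auto
  qed
qed

lemma sum_ind_card: "(\<Sum>k<n. indicator D (Z k \<omega>) :: real) = real (card {k. k < n \<and> Z k \<omega> \<in> D})"
proof (induction n)
  case 0 then show ?case by simp
next
  case (Suc n)
  show ?case
  proof (cases "Z n \<omega> \<in> D")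
    case True
    then have e: "{k. k < Suc n \<and> Z k \<omega> \<in> D} = insert n {k. k < n \<and> Z k \<omega> \<in> D}" by auto
    show ?thesis using Suc True unfolding e by simp
  next
    case False
    then have e: "{k. k < Suc n \<and> Z k \<omega> \<in> D} = {k. k < n \<and> Z k \<omega> \<in> D}" using less_Suc_eq by auto
    show ?thesis using Suc False unfolding e by simp
  qed
qed

lemma cnt_card: "cnt \<omega> n D = real (card {k. k < n \<and> Z k \<omega> \<in> D}) / real n"
  unfolding cnt_def sum_ind_card ..

lemma Hemp_cnt: "Hemp (\<lambda>k. X k \<omega>) (\<lambda>k. Y k \<omega>) n a b = cnt \<omega> n ({..a} \<times> {..b})"
  unfolding cnt_card Hemp_def Z_def by simp
lemma empF_cnt: "emp_df (\<lambda>k. X k \<omega>) n a = cnt \<omega> n ({..a} \<times> UNIV)"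
  unfolding cnt_card emp_df_def Z_def by simp
lemma empG_cnt: "emp_df (\<lambda>k. Y k \<omega>) n b = cnt \<omega> n (UNIV \<times> {..b})"
  unfolding cnt_card emp_df_def Z_def by simp

lemma cnt_meas: "D \<in> sets borel \<Longrightarrow> (\<lambda>\<omega>. cnt \<omega> n D) \<in> borel_measurable M"
  unfolding cnt_def
  by (intro borel_measurable_divide borel_measurable_sum measurable_compose[OF Zm] borel_measurable_indicator) auto

end

lemma summ_bound:
  assumes "0 < s" "s < 1/2" "0 < e"
  shows "summable (\<lambda>n::nat. 2*(4*real n powr s/e+3)^2 * exp(-2*real n*(e/(2*real n powr s))^2))"
proof -
  define g where "g n = 2*(4*real n powr s/e+3)^2 * exp(-2*real n*(e/(2*real n powr s))^2)" for n :: nat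
  have "(\<lambda>n::nat. real n ^ 2 * (2*(4*real n powr s/e+3)^2 * exp(-2*real n*(e/(2*real n powr s))^2))) \<longlonglongrightarrow> 0"
    using assms by real_asymp
  then have "eventually (\<lambda>n. dist (real n ^ 2 * g n) 0 < 1) sequentially"
    unfolding g_def tendsto_iff by auto
  then obtain N where N: "\<And>n. n \<ge> N \<Longrightarrow> \<bar>real n ^ 2 * g n\<bar> < 1"
    by (auto simp: eventually_sequentially dist_real_def)
  have "summable g"
  proof (rule summable_comparison_test'[OF inverse_power_summable[of 2]])
    fix n assume n: "n \<ge> N + 1"
    have gpos: "0 \<le> g n" unfolding g_def by simp
    have np: "real n > 0" using n by simp
    have "real n ^ 2 * g n \<le> 1" using N[of n] n by simp
    then have "g n \<le> 1 / real n ^ 2" using np by (simp add: field_simps)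
    then show "norm (g n) \<le> inverse (real n ^ 2)" using gpos by (simp add: divide_inverse)
  qed simp
  then show ?thesis unfolding g_def .
qed

context cop_setup begin

lemma rate:
  assumes s: "0 < s" "s < 1/2" and ep: "\<epsilon> > 0"
  shows "AE \<omega> in M. eventually (\<lambda>n. \<forall>a b.
      real n powr s * \<bar>cnt \<omega> n ({..a} \<times> {..b}) - P ({..a} \<times> {..b})\<bar> \<le> \<epsilon> \<and>
      real n powr s * \<bar>cnt \<omega> n ({..a} \<times> UNIV) - P ({..a} \<times> UNIV)\<bar> \<le> \<epsilon> \<and>
      real n powr s * \<bar>cnt \<omega> n (UNIV \<times> {..b}) - P (UNIV \<times> {..b})\<bar> \<le> \<epsilon>) sequentially"
proof -
  define ns where "ns n = real n powr s" for n :: nat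
  define m where "m n = nat \<lceil>4 * ns n / \<epsilon>\<rceil> + 1" for n
  define \<eta> where "\<eta> n = \<epsilon> / (2 * ns n)" for n
  define D where "D n r q = SF (m n) r \<times> SG (m n) q" for n r q
  define E where "E n r q = {\<omega> \<in> space M. \<eta> n \<le> \<bar>cnt \<omega> n (D n r q) - P (D n r q)\<bar>}" for n r q
  define Bad where "Bad n = (\<Union>rq\<in>{..m n} \<times> {..m n}. E n (fst rq) (snd rq))" for n
  have m1: "m n \<ge> 1" for n unfolding m_def by simp
  have nsp: "ns n > 0" if "n \<ge> 1" for n unfolding ns_def using that by simp
  have ns0: "ns n \<ge> 0" for n unfolding ns_def by simp
  have Db: "D n r q \<in> sets borel" if "r \<le> m n" "q \<le> m n" for n r q
    unfolding D_def using gp_borel[OF gpF[OF m1] that(1)] gp_borel[OF gpG[OF m1] that(2)] by (rule times_borel)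
  have Es: "E n r q \<in> sets M" if "r \<le> m n" "q \<le> m n" for n r q
  proof -
    have "(\<lambda>\<omega>. \<bar>cnt \<omega> n (D n r q) - P (D n r q)\<bar>) \<in> borel_measurable M"
      by (intro borel_measurable_abs borel_measurable_diff cnt_meas Db[OF that]) simp
    from measurable_sets[OF this atLeast_borel[of "\<eta> n"]] show ?thesis
      unfolding E_def by (simp add: vimage_def Int_def conj_commute)
  qed
  have Bs: "Bad n \<in> sets M" for n
    unfolding Bad_def by (rule sets.finite_UN) (auto intro: Es)
  define g where "g n = 2*(4*real n powr s/\<epsilon>+3)^2 * exp(-2*real n*(\<epsilon>/(2*real n powr s))^2)" for n :: nat
  have Bb: "measure M (Bad n) \<le> g n" if n: "n \<ge> 1" for n
  proof -
    have "measure M (Bad n) \<le> (\<Sum>rq\<in>{..m n} \<times> {..m n}. measure M (E n (fst rq) (snd rq)))"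
      unfolding Bad_def by (rule finite_measure_subadditive_finite) (auto intro: Es)
    also have "\<dots> \<le> (\<Sum>rq\<in>{..m n} \<times> {..m n}. 2 * exp (- 2 * real n * (\<eta> n)\<^sup>2))"
    proof (rule sum_mono)
      fix rq assume rq: "rq \<in> {..m n} \<times> {..m n}"
      show "measure M (E n (fst rq) (snd rq)) \<le> 2 * exp (- 2 * real n * (\<eta> n)\<^sup>2)"
        unfolding E_def using hoeffding_D[OF Db[of "fst rq" n "snd rq"] n, of "\<eta> n"] rq nsp[OF n] ep
        by (auto simp: \<eta>_def)
    qed
    also have "\<dots> = real (Suc (m n))^2 * (2 * exp (- 2 * real n * (\<eta> n)\<^sup>2))"
      by (simp add: power2_eq_square algebra_simps)
    also have "\<dots> \<le> (4 * ns n / \<epsilon> + 3)^2 * (2 * exp (- 2 * real n * (\<eta> n)\<^sup>2))"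
    proof (rule mult_right_mono)
      have x0: "0 \<le> 4 * ns n / \<epsilon>" using ns0 ep by simp
      have "real (Suc (m n)) \<le> 4 * ns n / \<epsilon> + 3" unfolding m_def using x0 by linarith
      then show "real (Suc (m n))^2 \<le> (4 * ns n / \<epsilon> + 3)^2" by (intro power_mono) auto
    qed simp
    also have "\<dots> = g n" unfolding g_def \<eta>_def ns_def by simp
    finally show ?thesis .
  qed
  have summ: "summable (\<lambda>n. measure M (Bad n))"
  proof (rule summable_comparison_test'[OF summ_bound[OF s ep]])
    fix n :: nat assume "n \<ge> 1"
    then show "norm (measure M (Bad n)) \<le> 2*(4*real n powr s/\<epsilon>+3)^2 * exp(-2*real n*(\<epsilon>/(2*real n powr s))^2)"
      using Bb unfolding g_def by simp
  qed
  have "AE \<omega> in M. eventually (\<lambda>n. \<omega> \<in> space M - Bad n) sequentially"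
    by (rule borel_cantelli_AE1[OF Bs _ summ]) (simp add: less_top[symmetric])
  then show ?thesis
  proof (rule eventually_mono)
    fix \<omega> assume ev: "eventually (\<lambda>n. \<omega> \<in> space M - Bad n) sequentially"
    show "eventually (\<lambda>n. \<forall>a b.
      real n powr s * \<bar>cnt \<omega> n ({..a} \<times> {..b}) - P ({..a} \<times> {..b})\<bar> \<le> \<epsilon> \<and>
      real n powr s * \<bar>cnt \<omega> n ({..a} \<times> UNIV) - P ({..a} \<times> UNIV)\<bar> \<le> \<epsilon> \<and>
      real n powr s * \<bar>cnt \<omega> n (UNIV \<times> {..b}) - P (UNIV \<times> {..b})\<bar> \<le> \<epsilon>) sequentially"
      using ev eventually_ge_at_top[of 1]
    proof eventually_elim
      case (elim n)
      have \<omega>: "\<omega> \<in> space M" "\<omega> \<notin> Bad n" using elim(1) by auto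
      have grid: "\<bar>cnt \<omega> n (SF (m n) r \<times> SG (m n) q) - P (SF (m n) r \<times> SG (m n) q)\<bar> \<le> \<eta> n"
        if "r \<le> m n" "q \<le> m n" for r q
      proof -
        have "\<omega> \<notin> E n r q" using \<omega>(2) that unfolding Bad_def by auto
        then show ?thesis using \<omega>(1) unfolding E_def D_def by auto
      qed
      note gF = gpF[OF m1[of n]] and gG = gpG[OF m1[of n]]
      have cU: "\<exists>r<m n. SF (m n) r \<subseteq> {..a} \<and> {..a} \<subseteq> SF (m n) (Suc r)" for a
        using gF unfolding gp_def by blast
      have cV: "\<exists>r<m n. SG (m n) r \<subseteq> {..a} \<and> {..a} \<subseteq> SG (m n) (Suc r)" for a
        using gG unfolding gp_def by blast
      have ub: "\<bar>cnt \<omega> n (U \<times> V) - P (U \<times> V)\<bar> \<le> \<eta> n + 2 * (1 / real (m n))"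
        if "U \<in> sets borel" "\<exists>r<m n. SF (m n) r \<subseteq> U \<and> U \<subseteq> SF (m n) (Suc r)"
           "V \<in> sets borel" "\<exists>q<m n. SG (m n) q \<subseteq> V \<and> V \<subseteq> SG (m n) (Suc q)" for U V
        by (rule unif_bound[OF m1 gF gG grid that]) auto
      have fin: "ns n * z \<le> \<epsilon>" if "z \<le> \<eta> n + 2 * (1 / real (m n))" for z
      proof -
        have np: "ns n > 0" using nsp elim(2) by simp
        have "4 * ns n / \<epsilon> \<le> real (m n)" unfolding m_def by linarith
        then have "4 * ns n \<le> \<epsilon> * real (m n)" using ep by (simp add: field_simps)
        then have "ns n * (2 * (1 / real (m n))) \<le> \<epsilon> / 2" using m1[of n] by (simp add: field_simps)
        moreover have "ns n * \<eta> n = \<epsilon> / 2" unfolding \<eta>_def using np by simp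
        moreover have "ns n * z \<le> ns n * (\<eta> n + 2 * (1 / real (m n)))" using that np by (intro mult_left_mono) auto
        ultimately show ?thesis by (simp add: distrib_left)
      qed
      show ?case
      proof (intro allI conjI)
        fix a b
        show "real n powr s * \<bar>cnt \<omega> n ({..a} \<times> {..b}) - P ({..a} \<times> {..b})\<bar> \<le> \<epsilon>"
          using fin[OF ub[OF _ cU _ cV]] unfolding ns_def by simp
        show "real n powr s * \<bar>cnt \<omega> n ({..a} \<times> UNIV) - P ({..a} \<times> UNIV)\<bar> \<le> \<epsilon>"
          using fin[OF ub[OF _ cU _ gp_univ[OF gG m1]]] unfolding ns_def by simp
        show "real n powr s * \<bar>cnt \<omega> n (UNIV \<times> {..b}) - P (UNIV \<times> {..b})\<bar> \<le> \<epsilon>"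
          using fin[OF ub[OF _ gp_univ[OF gF m1] _ cV]] unfolding ns_def by simp
      qed
    qed
  qed
qed

end

lemma gp_cell: "gp F m S \<Longrightarrow> m \<ge> 1 \<Longrightarrow> \<exists>r<m. t \<in> S (Suc r) - S r"
proof -
  assume g: "gp F m S" and m: "m \<ge> 1"
  have S0: "S 0 = {}" and Sm: "S m = UNIV" using g unfolding gp_def by auto
  define j where "j = (LEAST j. t \<in> S j)"
  have tj: "t \<in> S j" unfolding j_def by (rule LeastI[of _ m]) (simp add: Sm)
  have jm: "j \<le> m" unfolding j_def by (rule Least_le) (simp add: Sm)
  have j0: "j \<noteq> 0"
  proof
    assume "j = 0"
    then show False using tj S0 by simp
  qed
  then obtain r where r: "j = Suc r" by (cases j) auto
  have "t \<notin> S r" using not_less_Least[of r "\<lambda>j. t \<in> S j"] r unfolding j_def by auto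
  then show ?thesis using tj r jm by (intro exI[of _ r]) auto
qed

context cop_setup begin

lemma indep_pair:
  assumes kl: "k \<noteq> l" and B: "B \<in> sets borel"
  shows "prob {\<omega> \<in> space M. Z k \<omega> \<in> B \<and> Z l \<omega> \<in> B} = P B * P B"
proof -
  have "prob (\<Inter>i\<in>{k, l}. (\<lambda>\<omega>. (X i \<omega>, Y i \<omega>)) -` B \<inter> space M) =
        (\<Prod>i\<in>{k, l}. prob ((\<lambda>\<omega>. (X i \<omega>, Y i \<omega>)) -` B \<inter> space M))"
    by (rule indep_varsD[OF indep]) (use B in auto)
  moreover have "(\<Inter>i\<in>{k, l}. (\<lambda>\<omega>. (X i \<omega>, Y i \<omega>)) -` B \<inter> space M) = {\<omega> \<in> space M. Z k \<omega> \<in> B \<and> Z l \<omega> \<in> B}"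
    unfolding Z_def by auto
  moreover have "prob ((\<lambda>\<omega>. (X i \<omega>, Y i \<omega>)) -` B \<inter> space M) = P B" for i
  proof -
    have "(\<lambda>\<omega>. (X i \<omega>, Y i \<omega>)) -` B \<inter> space M = {\<omega> \<in> space M. Z i \<omega> \<in> B}" unfolding Z_def by auto
    then show ?thesis using P_ident[OF B, of i] by simp
  qed
  ultimately show ?thesis using kl by simp
qed

lemma tie_bound:
  assumes kl: "k \<noteq> l" and m: "m \<ge> 1" and S: "\<And>r. r < m \<Longrightarrow> C r \<in> sets borel"
    and PC: "\<And>r. r < m \<Longrightarrow> P (C r) = 1 / real m"
    and cov: "\<And>\<omega>. \<omega> \<in> space M \<Longrightarrow> Q \<omega> \<Longrightarrow> \<exists>r<m. Z k \<omega> \<in> C r \<and> Z l \<omega> \<in> C r"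
    and Qs: "{\<omega> \<in> space M. Q \<omega>} \<in> sets M"
  shows "prob {\<omega> \<in> space M. Q \<omega>} \<le> 1 / real m"
proof -
  have "prob {\<omega> \<in> space M. Q \<omega>} \<le> prob (\<Union>r\<in>{..<m}. {\<omega> \<in> space M. Z k \<omega> \<in> C r \<and> Z l \<omega> \<in> C r})"
  proof (rule finite_measure_mono)
    show "{\<omega> \<in> space M. Q \<omega>} \<subseteq> (\<Union>r\<in>{..<m}. {\<omega> \<in> space M. Z k \<omega> \<in> C r \<and> Z l \<omega> \<in> C r})"
      using cov by fastforce
    have "{\<omega> \<in> space M. Z k \<omega> \<in> C r \<and> Z l \<omega> \<in> C r} \<in> sets M" if "r < m" for r
    proof -
      have "{\<omega> \<in> space M. Z k \<omega> \<in> C r \<and> Z l \<omega> \<in> C r} = {\<omega> \<in> space M. Z k \<omega> \<in> C r} \<inter> {\<omega> \<in> space M. Z l \<omega> \<in> C r}" by auto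
      then show ?thesis using Pset[OF S[OF that]] by simp
    qed
    then show "(\<Union>r\<in>{..<m}. {\<omega> \<in> space M. Z k \<omega> \<in> C r \<and> Z l \<omega> \<in> C r}) \<in> sets M"
      by (intro sets.finite_UN) auto
  qed
  also have "\<dots> \<le> (\<Sum>r\<in>{..<m}. prob {\<omega> \<in> space M. Z k \<omega> \<in> C r \<and> Z l \<omega> \<in> C r})"
  proof (rule finite_measure_subadditive_finite)
    show "(\<lambda>r. {\<omega> \<in> space M. Z k \<omega> \<in> C r \<and> Z l \<omega> \<in> C r}) ` {..<m} \<subseteq> sets M"
    proof (rule image_subsetI)
      fix r assume "r \<in> {..<m}"
      have "{\<omega> \<in> space M. Z k \<omega> \<in> C r \<and> Z l \<omega> \<in> C r} = {\<omega> \<in> space M. Z k \<omega> \<in> C r} \<inter> {\<omega> \<in> space M. Z l \<omega> \<in> C r}" by auto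
      then show "{\<omega> \<in> space M. Z k \<omega> \<in> C r \<and> Z l \<omega> \<in> C r} \<in> sets M" using Pset[OF S] \<open>r \<in> {..<m}\<close> by simp
    qed
  qed simp
  also have "\<dots> = (\<Sum>r\<in>{..<m}. 1 / real m * (1 / real m))"
    by (rule sum.cong) (auto simp: indep_pair[OF kl S] PC)
  also have "\<dots> = 1 / real m" using m by (simp add: field_simps power2_eq_square)
  finally show ?thesis .
qed

lemma small_zero: "(\<And>m. m \<ge> 1 \<Longrightarrow> (p::real) \<le> 1 / real m) \<Longrightarrow> p \<le> 0"
proof (rule ccontr)
  assume h: "\<And>m. m \<ge> 1 \<Longrightarrow> p \<le> 1 / real m" and "\<not> p \<le> 0"
  then obtain n where n: "n > 0" "inverse (real n) < p" using ex_inverse_of_nat_less[of p] by auto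
  then show False using h[of n] by (simp add: divide_inverse)
qed

lemma no_tieX:
  assumes kl: "k \<noteq> l"
  shows "prob {\<omega> \<in> space M. X k \<omega> = X l \<omega>} = 0"
proof -
  have "prob {\<omega> \<in> space M. X k \<omega> = X l \<omega>} \<le> 1 / real m" if m: "m \<ge> 1" for m
  proof (rule tie_bound[OF kl m])
    note g = gpF[OF m]
    show "(SF m (Suc r) - SF m r) \<times> (UNIV :: real set) \<in> sets borel" if "r < m" for r
      using gp_borel[OF g, of r] gp_borel[OF g, of "Suc r"] that by (intro times_borel sets.Diff; simp)
    show "P ((SF m (Suc r) - SF m r) \<times> UNIV) = 1 / real m" if "r < m" for r
      using gp_cellF[OF g m that] .
    show "\<exists>r<m. Z k \<omega> \<in> (SF m (Suc r) - SF m r) \<times> UNIV \<and> Z l \<omega> \<in> (SF m (Suc r) - SF m r) \<times> UNIV"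
      if "X k \<omega> = X l \<omega>" for \<omega>
      using gp_cell[OF g m, of "X k \<omega>"] that unfolding Z_def by auto
    show "{\<omega> \<in> space M. X k \<omega> = X l \<omega>} \<in> sets M" by measurable
  qed
  then have "prob {\<omega> \<in> space M. X k \<omega> = X l \<omega>} \<le> 0" by (rule small_zero)
  then show ?thesis using measure_nonneg[of M] by (simp add: order_antisym)
qed

lemma no_tieY:
  assumes kl: "k \<noteq> l"
  shows "prob {\<omega> \<in> space M. Y k \<omega> = Y l \<omega>} = 0"
proof -
  have "prob {\<omega> \<in> space M. Y k \<omega> = Y l \<omega>} \<le> 1 / real m" if m: "m \<ge> 1" for m
  proof (rule tie_bound[OF kl m])
    note g = gpG[OF m]
    show "(UNIV :: real set) \<times> (SG m (Suc r) - SG m r) \<in> sets borel" if "r < m" for r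
      using gp_borel[OF g, of r] gp_borel[OF g, of "Suc r"] that by (intro times_borel sets.Diff; simp)
    show "P (UNIV \<times> (SG m (Suc r) - SG m r)) = 1 / real m" if "r < m" for r
      using gp_cellG[OF g m that] .
    show "\<exists>r<m. Z k \<omega> \<in> UNIV \<times> (SG m (Suc r) - SG m r) \<and> Z l \<omega> \<in> UNIV \<times> (SG m (Suc r) - SG m r)"
      if "Y k \<omega> = Y l \<omega>" for \<omega>
      using gp_cell[OF g m, of "Y k \<omega>"] that unfolding Z_def by auto
    show "{\<omega> \<in> space M. Y k \<omega> = Y l \<omega>} \<in> sets M" by measurable
  qed
  then have "prob {\<omega> \<in> space M. Y k \<omega> = Y l \<omega>} \<le> 0" by (rule small_zero)
  then show ?thesis using measure_nonneg[of M] by (simp add: order_antisym)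
qed

lemma AE_inj: "AE \<omega> in M. inj (\<lambda>k. X k \<omega>) \<and> inj (\<lambda>k. Y k \<omega>)"
proof -
  have "AE \<omega> in M. \<forall>kl :: nat \<times> nat. fst kl \<noteq> snd kl \<longrightarrow> X (fst kl) \<omega> \<noteq> X (snd kl) \<omega> \<and> Y (fst kl) \<omega> \<noteq> Y (snd kl) \<omega>"
  proof (subst AE_all_countable, intro allI)
    fix kl :: "nat \<times> nat"
    show "AE \<omega> in M. fst kl \<noteq> snd kl \<longrightarrow> X (fst kl) \<omega> \<noteq> X (snd kl) \<omega> \<and> Y (fst kl) \<omega> \<noteq> Y (snd kl) \<omega>"
    proof (cases "fst kl = snd kl")
      case True then show ?thesis by simp
    next
      case False
      define N where "N = {\<omega> \<in> space M. X (fst kl) \<omega> = X (snd kl) \<omega>} \<union> {\<omega> \<in> space M. Y (fst kl) \<omega> = Y (snd kl) \<omega>}"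
      have Ns: "N \<in> sets M" unfolding N_def by measurable
      have "measure M N \<le> 0"
        unfolding N_def
        by (rule order.trans[OF measure_Un_le]) (use no_tieX[OF False] no_tieY[OF False] in \<open>auto intro: Ns\<close>)
      then have "emeasure M N = 0" using Ns by (simp add: emeasure_eq_measure measure_nonneg antisym)
      then have "N \<in> null_sets M" using Ns by auto
      then show ?thesis by (rule AE_I') (auto simp: N_def)
    qed
  qed
  then show ?thesis
    by (rule eventually_mono) (auto simp: inj_def)
qed

end

theorem theorem3p1:
  fixes M :: "'a measure"
    and X Y :: "nat \<Rightarrow> 'a \<Rightarrow> real"
    and H :: "real \<Rightarrow> real \<Rightarrow> real" and F G :: "real \<Rightarrow> real"
    and A :: "real \<Rightarrow> real \<Rightarrow> real" and KA :: "real \<Rightarrow> real measure"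
    and KH :: "real \<Rightarrow> real \<Rightarrow> real"
    and s :: real
  assumes "prob_space M"
    and "\<And>i. X i \<in> borel_measurable M" and "\<And>i. Y i \<in> borel_measurable M"
    and "prob_space.indep_vars M (\<lambda>_. borel) (\<lambda>i \<omega>. (X i \<omega>, Y i \<omega>)) UNIV"
    and "\<And>i. distr M borel (\<lambda>\<omega>. (X i \<omega>, Y i \<omega>)) = distr M borel (\<lambda>\<omega>. (X 0 \<omega>, Y 0 \<omega>))"
    and "\<And>x y. H x y = measure M {\<omega> \<in> space M. X 0 \<omega> \<le> x \<and> Y 0 \<omega> \<le> y}"
    and "\<And>x. F x = measure M {\<omega> \<in> space M. X 0 \<omega> \<le> x}"
    and "\<And>y. G y = measure M {\<omega> \<in> space M. Y 0 \<omega> \<le> y}"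
    and "continuous_on UNIV (\<lambda>(x, y). H x y)"
    and "is_copula A" and "\<And>x y. H x y = A (F x) (G y)"
    and "continuous_markov_kernel_of A KA"
    and "\<And>x y. KH x y = measure (KA (F x)) {0..G y}"
    and "0 < s" and "s < 1 / 2"
  shows "AE \<omega> in M.
    (\<lambda>n. SUP p \<in> (UNIV :: (real \<times> real) set).
        \<bar>cb_kernel (nat \<lfloor>real n powr s\<rfloor>) (emp_copula (\<lambda>k. X k \<omega>) (\<lambda>k. Y k \<omega>) n)
            (emp_df (\<lambda>k. X k \<omega>) n (fst p)) (emp_df (\<lambda>k. Y k \<omega>) n (snd p))
         - KH (fst p) (snd p)\<bar>) \<longlonglongrightarrow> 0"
proof -
  interpret cop_setup M X Y H F G A
    by (rule cop_setup.intro[OF assms(1)], rule cop_setup_axioms.intro) (use assms in auto)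
  note s = assms(14,15) and K = assms(12) and Acop = assms(10)
  define N where "N n = nat \<lfloor>real n powr s\<rfloor>" for n :: nat
  have NB: "real (N n) \<le> real n powr s" for n unfolding N_def by simp
  have N0: "0 \<le> real (N n)" for n by simp
  have pinf: "filterlim (\<lambda>n::nat. real n powr s) at_top at_top" using s by real_asymp
  have Ninf: "filterlim N at_top sequentially"
    unfolding filterlim_at_top
  proof
    fix Z :: nat
    have "eventually (\<lambda>n. real n powr s \<ge> real Z) sequentially"
      using pinf by (simp add: filterlim_at_top)
    then show "eventually (\<lambda>n. Z \<le> N n) sequentially"
      by (rule eventually_mono) (simp add: N_def le_nat_floor)
  qed
  have Nn: "(\<lambda>n. real (N n) / real n) \<longlonglongrightarrow> 0"
  proof (rule tendsto_sandwich[of "\<lambda>_. 0" _ _ "\<lambda>n. real n powr s / real n"])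
    show "\<forall>\<^sub>F n in sequentially. 0 \<le> real (N n) / real n" by simp
    show "\<forall>\<^sub>F n in sequentially. real (N n) / real n \<le> real n powr s / real n"
      by (intro always_eventually allI divide_right_mono NB) simp
    show "(\<lambda>n::nat. real n powr s / real n) \<longlonglongrightarrow> 0" using s by real_asymp
  qed simp
  have rates: "AE \<omega> in M. \<forall>j::nat. eventually (\<lambda>n. \<forall>a b.
      real n powr s * \<bar>cnt \<omega> n ({..a} \<times> {..b}) - P ({..a} \<times> {..b})\<bar> \<le> 1 / (real j + 1) \<and>
      real n powr s * \<bar>cnt \<omega> n ({..a} \<times> UNIV) - P ({..a} \<times> UNIV)\<bar> \<le> 1 / (real j + 1) \<and>
      real n powr s * \<bar>cnt \<omega> n (UNIV \<times> {..b}) - P (UNIV \<times> {..b})\<bar> \<le> 1 / (real j + 1)) sequentially"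
    by (subst AE_all_countable) (intro allI rate[OF s]; simp)
  show ?thesis
    using rates AE_inj
  proof (eventually_elim)
    case (elim \<omega>)
    have lim: "(\<lambda>n. SUP p\<in>UNIV. \<bar>cb_kernel (N n) (emp_copula (\<lambda>k. X k \<omega>) (\<lambda>k. Y k \<omega>) n)
      (emp_df (\<lambda>k. X k \<omega>) n (fst p)) (emp_df (\<lambda>k. Y k \<omega>) n (snd p))
      - measure (KA (F (fst p))) {0..G (snd p)}\<bar>) \<longlonglongrightarrow> 0"
    proof (rule det_limit[OF Acop K _ _ HA F01 G01 Ninf Nn])
      show "inj (\<lambda>k. X k \<omega>)" "inj (\<lambda>k. Y k \<omega>)" using elim(2) by auto
      fix \<epsilon> :: real assume ep: "\<epsilon> > 0"
      obtain j :: nat where j: "1 / (real j + 1) < \<epsilon>"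
      proof -
        obtain n where "n > 0" "inverse (real n) < \<epsilon>" using ex_inverse_of_nat_less[OF ep] by auto
        then show ?thesis by (intro that[of "n - 1"]) (simp add: of_nat_diff divide_inverse)
      qed
      have sc: "real (N n) * z \<le> \<epsilon>" if "real n powr s * z \<le> 1 / (real j + 1)" "0 \<le> z" for n z
      proof -
        have "real (N n) * z \<le> real n powr s * z" using NB that(2) by (intro mult_right_mono) auto
        then show ?thesis using that(1) j by linarith
      qed
      show "eventually (\<lambda>n. \<forall>a b. real (N n) * \<bar>Hemp (\<lambda>k. X k \<omega>) (\<lambda>k. Y k \<omega>) n a b - H a b\<bar> \<le> \<epsilon> \<and>
        real (N n) * \<bar>emp_df (\<lambda>k. X k \<omega>) n a - F a\<bar> \<le> \<epsilon> \<and> real (N n) * \<bar>emp_df (\<lambda>k. Y k \<omega>) n b - G b\<bar> \<le> \<epsilon>) sequentially"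
        using elim(1)[rule_format, of j]
      proof (rule eventually_mono)
        fix n assume h: "\<forall>a b.
      real n powr s * \<bar>cnt \<omega> n ({..a} \<times> {..b}) - P ({..a} \<times> {..b})\<bar> \<le> 1 / (real j + 1) \<and>
      real n powr s * \<bar>cnt \<omega> n ({..a} \<times> UNIV) - P ({..a} \<times> UNIV)\<bar> \<le> 1 / (real j + 1) \<and>
      real n powr s * \<bar>cnt \<omega> n (UNIV \<times> {..b}) - P (UNIV \<times> {..b})\<bar> \<le> 1 / (real j + 1)"
        show "\<forall>a b. real (N n) * \<bar>Hemp (\<lambda>k. X k \<omega>) (\<lambda>k. Y k \<omega>) n a b - H a b\<bar> \<le> \<epsilon> \<and>
          real (N n) * \<bar>emp_df (\<lambda>k. X k \<omega>) n a - F a\<bar> \<le> \<epsilon> \<and> real (N n) * \<bar>emp_df (\<lambda>k. Y k \<omega>) n b - G b\<bar> \<le> \<epsilon>"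
          unfolding Hemp_cnt empF_cnt empG_cnt H_P F_P G_P using h sc by simp
      qed
    qed
    then show ?case unfolding N_def assms(13) .
  qed
qed


end
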